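(* Let $\{w_k\}$ be generated by the subsampled Newton iteration $w_{k+1}=w_k-\nabla^2F_{S_k}(w_k)^{-1}\nabla F_{X_k}(w_k)$ with unit steplength. Suppose Assumptions A1–A4 and B1 hold and that for all $k$: (i) $|X_k|\ge|X_0|\,\eta_k^{\,k}$, where $|X_0|\ge\left(\frac{6v\gamma M}{\bar\mu^2}\right)^2$, $\eta_k>\eta_{k-1}$, $\eta_k\to\infty$, and $\eta_1>1$; (ii) $|S_k|>|S_{k-1}|$, $\lim_{k\to\infty}|S_k|=\infty$, and $|S_0|\ge\left(\frac{4\sigma}{\bar\mu}\right)^2$. If $\|w_0-w^*\|\le\frac{\bar\mu}{3\gamma M}$, then $\mathbb{E}[\|w_k-w^*\|]\to0$ R-superlinearly, i.e., there is a positive sequence $\{\tau_k\}$ with $\mathbb{E}[\|w_k-w^*\|]\le\tau_k$ for all $k$ and $\tau_{k+1}/\tau_k\to0$.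
   Context: Setting: $P$ is a probability distribution on input–output pairs $(x,y)$, $F(w)=\int f(w;x,y)\,dP(x,y)$ for $w\in\mathbb{R}^d$. Sample points $(x^i,y^i)$ are drawn independently from $P$, $F_i(w)=f(w;x^i,y^i)$ (so $\nabla F_i$, $\nabla^2F_i$ are unbiased for $\nabla F$, $\nabla^2F$). For a finite index set $S$, $\nabla F_S(w)=\frac1{|S|}\sum_{i\in S}\nabla F_i(w)$, $\nabla^2F_S(w)=\frac1{|S|}\sum_{i\in S}\nabla^2F_i(w)$. The samples $X_k,S_k$ are index sets of independently drawn points, chosen independently of each other and of the past. $w^*$ is the unique minimizer of $F$. Assumption A1: $F$ is twice continuously differentiable; for every positive integer $\beta$ there are $0<\mu_\beta\le L_\beta$ with $\mu_\beta I\preceq\nabla^2F_S(w)\preceq L_\beta I$ for all $w$ and all $|S|=\beta$; constants $0<\bar\mu\le\mu_\beta$ and $L_\beta\le\bar L<\infty$ for all $\beta$; and $\mu I\preceq\nabla^2F(w)\preceq LI$ for all $w$. Assumption A2: $\operatorname{tr}(\operatorname{Cov}(\nabla F_i(w)))\le v^2$ for all $w$. Assumption A3: $\|\nabla^2F(w)-\nabla^2F(z)\|\le M\|w-z\|$ for all $w,z$. Assumption A4: $\|\mathbb{E}[(\nabla^2F_i(w)-\nabla^2F(w))^2]\|\le\sigma^2$ for all $w$. Assumption B1: there is $\gamma>0$ such that every iterate satisfies $\mathbb{E}[\|w_k-w^*\|^2]\le\gamma(\mathbb{E}[\|w_k-w^*\|])^2$. *)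

theory Defs
  imports "HOL-Probability.Probability"
begin

definition loewner_le :: "real^'n^'n \<Rightarrow> real^'n^'n \<Rightarrow> bool" where
  "loewner_le A B \<longleftrightarrow> (\<forall>x. x \<bullet> (A *v x) \<le> x \<bullet> (B *v x))"

text \<open>Sample points: Z (False,k,i) is the i-th point of X_k, Z (True,k,i) the i-th point of S_k.\<close>
definition sample_grad ::
  "(real^'n \<Rightarrow> 'z \<Rightarrow> real^'n) \<Rightarrow> (bool \<times> nat \<times> nat \<Rightarrow> 'a \<Rightarrow> 'z) \<Rightarrow> (nat \<Rightarrow> nat)
    \<Rightarrow> nat \<Rightarrow> real^'n \<Rightarrow> 'a \<Rightarrow> real^'n" where
  "sample_grad grad Z nX k w \<omega> = (1 / real (nX k)) *\<^sub>R (\<Sum>i<nX k. grad w (Z (False, k, i) \<omega>))"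

definition sample_hess ::
  "(real^'n \<Rightarrow> 'z \<Rightarrow> real^'n^'n) \<Rightarrow> (bool \<times> nat \<times> nat \<Rightarrow> 'a \<Rightarrow> 'z) \<Rightarrow> (nat \<Rightarrow> nat)
    \<Rightarrow> nat \<Rightarrow> real^'n \<Rightarrow> 'a \<Rightarrow> real^'n^'n" where
  "sample_hess hess Z nS k w \<omega> = (1 / real (nS k)) *\<^sub>R (\<Sum>i<nS k. hess w (Z (True, k, i) \<omega>))"

primrec sn_iter ::
  "real^'n \<Rightarrow> (real^'n \<Rightarrow> 'z \<Rightarrow> real^'n) \<Rightarrow> (real^'n \<Rightarrow> 'z \<Rightarrow> real^'n^'n)
    \<Rightarrow> (bool \<times> nat \<times> nat \<Rightarrow> 'a \<Rightarrow> 'z) \<Rightarrow> (nat \<Rightarrow> nat) \<Rightarrow> (nat \<Rightarrow> nat) \<Rightarrow> nat \<Rightarrow> 'a \<Rightarrow> real^'n" where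
  "sn_iter w0 grad hess Z nX nS 0 = (\<lambda>\<omega>. w0)"
| "sn_iter w0 grad hess Z nX nS (Suc k) =
     (\<lambda>\<omega>. sn_iter w0 grad hess Z nX nS k \<omega>
        - matrix_inv (sample_hess hess Z nS k (sn_iter w0 grad hess Z nX nS k \<omega>) \<omega>)
            *v sample_grad grad Z nX k (sn_iter w0 grad hess Z nX nS k \<omega>) \<omega>)"

definition sample_index :: "(nat \<Rightarrow> nat) \<Rightarrow> (nat \<Rightarrow> nat) \<Rightarrow> (bool \<times> nat \<times> nat) set" where
  "sample_index nX nS = {(b, k, i). i < (if b then nS k else nX k)}"

end

theory Submission
  imports Defs
begin

lemma schwarz_sym:
  fixes f :: "real^'n \<Rightarrow> real" and g :: "real^'n \<Rightarrow> real^'n" and H :: "real^'n \<Rightarrow> real^'n^'n"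
  assumes fd: "\<And>w. (f has_derivative (\<lambda>h. g w \<bullet> h)) (at w)"
    and gd: "\<And>w. (g has_derivative (\<lambda>h. H w *v h)) (at w)"
  shows "(H x *v k) \<bullet> h = (H x *v h) \<bullet> k"
proof -
  define D where "D h k t = f (x + t *\<^sub>R h + t *\<^sub>R k) - f (x + t *\<^sub>R h) - f (x + t *\<^sub>R k) + f x" for h k t
  have key: "\<exists>d>0. \<forall>t. t > 0 \<and> t * (norm h + norm k) < d \<longrightarrow> \<bar>D h k t - t\<^sup>2 * ((H x *v k) \<bullet> h)\<bar> \<le> 2 * e * t\<^sup>2 * (norm h + norm k) * norm h"
    if e: "e > 0" for e h k
  proof -
    from gd[of x, unfolded has_derivative_at_alt] e obtain d where d: "d > 0"
      and dd: "\<And>y. norm (y - x) < d \<Longrightarrow> norm (g y - g x - H x *v (y - x)) \<le> e * norm (y - x)"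
      by blast
    show ?thesis
    proof (intro exI[of _ d] conjI allI impI)
    show "d > 0" by fact
    fix t :: real assume tt: "t > 0 \<and> t * (norm h + norm k) < d"
    have t0: "t > 0" using tt by simp
    have tsmall: "t * (norm h + norm k) < d" using tt by simp
    define r where "r y = g (x + y) - g x - H x *v y" for y
    have rb: "norm (r y) \<le> e * norm y" if "norm y < d" for y
      using dd[of "x + y"] that by (simp add: r_def)
    define \<psi> where "\<psi> u = f (x + u + t *\<^sub>R k) - f (x + u) - (H x *v (t *\<^sub>R k)) \<bullet> u" for u
    define S where "S = closed_segment 0 (t *\<^sub>R h)"
    have der: "(\<psi> has_derivative (\<lambda>v. (g (x + u + t *\<^sub>R k) - g (x + u) - H x *v (t *\<^sub>R k)) \<bullet> v)) (at u within S)" for u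
    proof -
      have tr1: "((\<lambda>u. x + u + t *\<^sub>R k) has_derivative (\<lambda>v. v)) (at u)"
        by (auto intro!: derivative_eq_intros)
      have tr2: "((\<lambda>u. x + u) has_derivative (\<lambda>v. v)) (at u)"
        by (auto intro!: derivative_eq_intros)
      have a: "((\<lambda>u. f (x + u + t *\<^sub>R k)) has_derivative (\<lambda>v. g (x + u + t *\<^sub>R k) \<bullet> v)) (at u)"
        using has_derivative_compose[OF tr1 fd] by simp
      have b: "((\<lambda>u. f (x + u)) has_derivative (\<lambda>v. g (x + u) \<bullet> v)) (at u)"
        using has_derivative_compose[OF tr2 fd] by simp
      have c: "((\<lambda>u. (H x *v (t *\<^sub>R k)) \<bullet> u) has_derivative (\<lambda>v. (H x *v (t *\<^sub>R k)) \<bullet> v)) (at u)"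
        by (auto intro!: derivative_eq_intros)
      have "(\<psi> has_derivative (\<lambda>v. g (x + u + t *\<^sub>R k) \<bullet> v - g (x + u) \<bullet> v - (H x *v (t *\<^sub>R k)) \<bullet> v)) (at u)"
        unfolding \<psi>_def by (intro has_derivative_diff a b c)
      then show ?thesis by (auto simp: inner_diff_left intro: has_derivative_at_withinI)
    qed
    have bnd: "onorm (\<lambda>v. (g (x + u + t *\<^sub>R k) - g (x + u) - H x *v (t *\<^sub>R k)) \<bullet> v) \<le> 2 * e * t * (norm h + norm k)"
      if u: "u \<in> S" for u
    proof -
      obtain s where s: "0 \<le> s" "s \<le> 1" "u = s *\<^sub>R (t *\<^sub>R h)"
        using u unfolding S_def closed_segment_def by auto
      have nu: "norm u \<le> t * norm h" using s t0 by (simp add: mult_left_le_one_le)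
      have nuk: "norm (u + t *\<^sub>R k) \<le> t * (norm h + norm k)"
        using norm_triangle_ineq[of u "t *\<^sub>R k"] nu t0 by (simp add: algebra_simps)
      have "t * norm h \<le> t * (norm h + norm k)" using t0 by simp
      then have nu': "norm u < d" using nu tsmall by linarith
      have nuk': "norm (u + t *\<^sub>R k) < d" using nuk tsmall by linarith
      have eq: "g (x + u + t *\<^sub>R k) - g (x + u) - H x *v (t *\<^sub>R k) = r (u + t *\<^sub>R k) - r u"
        by (simp add: r_def matrix_vector_right_distrib algebra_simps)
      have "norm (r (u + t *\<^sub>R k) - r u) \<le> e * norm (u + t *\<^sub>R k) + e * norm u"
        using rb[OF nu'] rb[OF nuk'] norm_triangle_ineq4[of "r (u + t *\<^sub>R k)" "r u"] by linarith
      also have "\<dots> \<le> e * (t * (norm h + norm k)) + e * (t * (norm h + norm k))"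
        using nuk nu e \<open>t * norm h \<le> t * (norm h + norm k)\<close>
        by (intro add_mono mult_left_mono) auto
      finally have X: "norm (r (u + t *\<^sub>R k) - r u) \<le> 2 * e * t * (norm h + norm k)"
        by (simp add: algebra_simps)
      have nb: "norm (g (x + u + t *\<^sub>R k) - g (x + u) - H x *v (t *\<^sub>R k)) \<le> 2 * e * t * (norm h + norm k)"
        unfolding eq by (rule X)
      show ?thesis
      proof (rule onorm_le)
        fix v :: "real^'n"
        have "norm ((g (x + u + t *\<^sub>R k) - g (x + u) - H x *v (t *\<^sub>R k)) \<bullet> v)
              \<le> norm (g (x + u + t *\<^sub>R k) - g (x + u) - H x *v (t *\<^sub>R k)) * norm v"
          using Cauchy_Schwarz_ineq2 by (simp only: real_norm_def)
        also have "\<dots> \<le> 2 * e * t * (norm h + norm k) * norm v"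
          by (rule mult_right_mono[OF nb norm_ge_zero])
        finally show "norm ((g (x + u + t *\<^sub>R k) - g (x + u) - H x *v (t *\<^sub>R k)) \<bullet> v) \<le> 2 * e * t * (norm h + norm k) * norm v" .
      qed
    qed
    have "norm (\<psi> (t *\<^sub>R h) - \<psi> 0) \<le> 2 * e * t * (norm h + norm k) * norm (t *\<^sub>R h - 0)"
      by (rule differentiable_bound[of S \<psi>, OF _ der bnd]) (auto simp: S_def)
    moreover have "\<psi> (t *\<^sub>R h) - \<psi> 0 = D h k t - t\<^sup>2 * ((H x *v k) \<bullet> h)"
    proof -
      have p1: "\<psi> (t *\<^sub>R h) = f (x + t *\<^sub>R h + t *\<^sub>R k) - f (x + t *\<^sub>R h) - t\<^sup>2 * ((H x *v k) \<bullet> h)"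
        unfolding \<psi>_def by (simp add: power2_eq_square scaleR_matrix_vector_assoc[symmetric] matrix_vector_mult_scaleR)
      have p0: "\<psi> 0 = f (x + t *\<^sub>R k) - f x" unfolding \<psi>_def by simp
      show ?thesis unfolding p1 p0 D_def by simp
    qed
    ultimately have "\<bar>D h k t - t\<^sup>2 * ((H x *v k) \<bullet> h)\<bar> \<le> 2 * e * t * (norm h + norm k) * (t * norm h)"
      using t0 by simp
    then show "\<bar>D h k t - t\<^sup>2 * ((H x *v k) \<bullet> h)\<bar> \<le> 2 * e * t\<^sup>2 * (norm h + norm k) * norm h"
      using t0 by (simp add: power2_eq_square algebra_simps)
  qed
  qed
  show ?thesis
  proof (rule ccontr)
    assume ne: "(H x *v k) \<bullet> h \<noteq> (H x *v h) \<bullet> k"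
    define c where "c = \<bar>(H x *v k) \<bullet> h - (H x *v h) \<bullet> k\<bar>"
    define C where "C = 2 * (norm h + norm k) * (norm h + norm k) + 1"
    have c0: "c > 0" using ne by (simp add: c_def)
    have C0: "C > 0" by (simp add: C_def add_nonneg_pos)
    define e where "e = c / (2 * C)"
    have e0: "e > 0" using c0 C0 by (simp add: e_def)
    obtain d1 where d1: "d1 > 0" and k1: "\<And>t. t > 0 \<and> t * (norm h + norm k) < d1 \<Longrightarrow> \<bar>D h k t - t\<^sup>2 * ((H x *v k) \<bullet> h)\<bar> \<le> 2 * e * t\<^sup>2 * (norm h + norm k) * norm h"
      using key[OF e0, of h k] by blast
    obtain d2 where d2: "d2 > 0" and k2: "\<And>t. t > 0 \<and> t * (norm k + norm h) < d2 \<Longrightarrow> \<bar>D k h t - t\<^sup>2 * ((H x *v h) \<bullet> k)\<bar> \<le> 2 * e * t\<^sup>2 * (norm k + norm h) * norm k"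
      using key[OF e0, of k h] by blast
    define t where "t = min d1 d2 / (norm h + norm k + 1)"
    have p: "norm h + norm k + 1 > 0" by (simp add: add_nonneg_pos)
    have t0: "t > 0" using d1 d2 p by (simp add: t_def)
    have "t * (norm h + norm k) < t * (norm h + norm k + 1)" using t0 by simp
    also have "\<dots> = min d1 d2" using p by (simp add: t_def)
    finally have ts: "t * (norm h + norm k) < d1" "t * (norm k + norm h) < d2" by (simp_all add: add.commute)
    have Dsym: "D k h t = D h k t" by (simp add: D_def algebra_simps)
    have A: "\<bar>D h k t - t\<^sup>2 * ((H x *v k) \<bullet> h)\<bar> \<le> 2 * e * t\<^sup>2 * (norm h + norm k) * norm h"
      using k1 t0 ts by blast
    have B: "\<bar>D h k t - t\<^sup>2 * ((H x *v h) \<bullet> k)\<bar> \<le> 2 * e * t\<^sup>2 * (norm h + norm k) * norm k"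
      using k2[of t] t0 ts Dsym by (simp add: add.commute)
    have "t\<^sup>2 * c \<le> 2 * e * t\<^sup>2 * (norm h + norm k) * norm h + 2 * e * t\<^sup>2 * (norm h + norm k) * norm k"
    proof -
      have "t\<^sup>2 * c = \<bar>(D h k t - t\<^sup>2 * ((H x *v h) \<bullet> k)) - (D h k t - t\<^sup>2 * ((H x *v k) \<bullet> h))\<bar>"
      proof -
        have "\<bar>(D h k t - t\<^sup>2 * ((H x *v h) \<bullet> k)) - (D h k t - t\<^sup>2 * ((H x *v k) \<bullet> h))\<bar>
            = \<bar>t\<^sup>2 * ((H x *v k) \<bullet> h - (H x *v h) \<bullet> k)\<bar>" by (simp add: algebra_simps)
        also have "\<dots> = t\<^sup>2 * c" by (simp add: abs_mult c_def)
        finally show ?thesis by simp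
      qed
      then show ?thesis using A B by linarith
    qed
    also have "\<dots> = t\<^sup>2 * (e * (2 * (norm h + norm k) * (norm h + norm k)))" by (simp add: algebra_simps)
    also have "\<dots> < t\<^sup>2 * c"
    proof -
      have "e * (2 * (norm h + norm k) * (norm h + norm k)) < e * C" using e0 by (simp add: C_def)
      also have "\<dots> = c / 2" using C0 by (simp add: e_def)
      also have "\<dots> < c" using c0 by simp
      finally show ?thesis using t0 by simp
    qed
    finally show False by simp
  qed
qed


lemma meas_vec_iff:
  fixes f :: "'b \<Rightarrow> 'c::euclidean_space^'n"
  shows "f \<in> borel_measurable N \<longleftrightarrow> (\<forall>i. (\<lambda>x. f x $ i) \<in> borel_measurable N)"
proof safe
  fix i assume "f \<in> borel_measurable N"
  moreover have "continuous_on UNIV (\<lambda>x::'c^'n. x $ i)" by (intro continuous_intros)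
  ultimately show "(\<lambda>x. f x $ i) \<in> borel_measurable N"
    using borel_measurable_continuous_on by blast
next
  assume a: "\<forall>i. (\<lambda>x. f x $ i) \<in> borel_measurable N"
  show "f \<in> borel_measurable N"
    unfolding borel_measurable_euclidean_space[where f=f]
  proof
    fix b :: "'c^'n" assume "b \<in> Basis"
    then obtain i u where b: "b = axis i u" "u \<in> Basis" unfolding Basis_vec_def by auto
    have "(\<lambda>x. f x $ i \<bullet> u) \<in> borel_measurable N" using a by (intro borel_measurable_inner) auto
    then show "(\<lambda>x. f x \<bullet> b) \<in> borel_measurable N" using b by (simp add: inner_axis)
  qed
qed

lemma meas_mat_entry:
  fixes A :: "'b \<Rightarrow> real^'n^'m"
  assumes "A \<in> borel_measurable N"
  shows "(\<lambda>x. A x $ i $ j) \<in> borel_measurable N"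
proof -
  have "(\<lambda>x. A x $ i) \<in> borel_measurable N" using assms meas_vec_iff by blast
  then show ?thesis using meas_vec_iff[where f="\<lambda>x. A x $ i"] by blast
qed

lemma meas_det:
  fixes A :: "'b \<Rightarrow> real^'n^'n"
  assumes "A \<in> borel_measurable N"
  shows "(\<lambda>x. det (A x)) \<in> borel_measurable N"
  unfolding det_def
  by (intro borel_measurable_sum borel_measurable_times borel_measurable_prod
        meas_mat_entry[OF assms] measurable_const) auto

definition cramer_vec :: "real^'n^'n \<Rightarrow> real^'n \<Rightarrow> real^'n" where
  "cramer_vec A b = (\<chi> k. det(\<chi> i j. if j=k then b$i else A$i$j) / det A)"

lemma meas_cramer:
  fixes A :: "'b \<Rightarrow> real^'n^'n" and b :: "'b \<Rightarrow> real^'n"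
  assumes "A \<in> borel_measurable N" "b \<in> borel_measurable N"
  shows "(\<lambda>x. cramer_vec (A x) (b x)) \<in> borel_measurable N"
proof -
  have bi: "(\<lambda>x. b x $ i) \<in> borel_measurable N" for i using assms(2) meas_vec_iff by blast
  have "(\<lambda>x. (\<chi> i j. if j=k then b x $i else A x $i$j) :: real^'n^'n) \<in> borel_measurable N" for k
    unfolding meas_vec_iff[where f="\<lambda>x. (\<chi> i j. if j=k then b x $i else A x $i$j) :: real^'n^'n"]
    by (auto simp: meas_vec_iff intro!: measurable_If bi meas_mat_entry[OF assms(1)])
  then have "(\<lambda>x. det (\<chi> i j. if j=k then b x $i else A x $i$j) / det (A x)) \<in> borel_measurable N" for k
    by (intro borel_measurable_divide meas_det assms)
  then show ?thesis unfolding meas_vec_iff[where f="\<lambda>x. cramer_vec (A x) (b x)"]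
    by (simp add: cramer_vec_def)
qed

lemma matrix_inv_cramer:
  fixes A :: "real^'n^'n"
  assumes "det A \<noteq> 0"
  shows "matrix_inv A *v b = cramer_vec A b"
proof -
  have inv: "invertible A" using assms invertible_det_nz by blast
  then have "A ** matrix_inv A = mat 1" unfolding invertible_def matrix_inv_def
    by (rule someI2_ex) auto
  then have "A *v (matrix_inv A *v b) = b" by (simp add: matrix_vector_mul_assoc)
  then show ?thesis using cramer[OF assms] unfolding cramer_vec_def by blast
qed

lemma matrix_inv_left:
  fixes A :: "real^'n^'n"
  assumes "invertible A"
  shows "matrix_inv A ** A = mat 1"
  using assms unfolding invertible_def matrix_inv_def by (rule someI2_ex) auto

lemma mat_mv: "(mat m :: real^'n^'n) *v y = m *\<^sub>R y"
  by (simp add: vec_eq_iff matrix_vector_mult_def mat_def if_distrib if_distribR cong: if_cong)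

lemma loewner_inv:
  fixes A :: "real^'n^'n"
  assumes L: "loewner_le (mat m) A" and m: "m > 0"
  shows "invertible A" "det A \<noteq> 0" "\<And>y. matrix_inv A *v (A *v y) = y"
    "\<And>x. norm (matrix_inv A *v x) \<le> norm x / m"
proof -
  have q: "m * norm y ^ 2 \<le> y \<bullet> (A *v y)" for y
    using L unfolding loewner_le_def by (simp add: mat_mv power2_norm_eq_inner)
  have nb: "m * norm y \<le> norm (A *v y)" for y
  proof (cases "y = 0")
    case False
    have "m * norm y ^ 2 \<le> norm y * norm (A *v y)"
      using q[of y] Cauchy_Schwarz_ineq2[of y "A *v y"] by linarith
    then show ?thesis using False by (simp add: power2_eq_square)
  qed simp
  have "inj ((*v) A)" unfolding vec.inj_iff_eq_0
  proof (intro allI impI)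
    fix x assume "A *v x = 0"
    then have "m * norm x \<le> 0" using nb[of x] by simp
    then show "x = 0" using m by (simp add: mult_le_0_iff)
  qed
  then show inv: "invertible A" using invertible_left_inverse matrix_left_invertible_injective by blast
  then show "det A \<noteq> 0" using invertible_det_nz by blast
  show li: "matrix_inv A *v (A *v y) = y" for y
    using matrix_inv_left[OF inv] by (simp add: matrix_vector_mul_assoc)
  show "norm (matrix_inv A *v x) \<le> norm x / m" for x
  proof -
    have "A ** matrix_inv A = mat 1" using inv unfolding invertible_def matrix_inv_def
      by (rule someI2_ex) auto
    then have "A *v (matrix_inv A *v x) = x" by (simp add: matrix_vector_mul_assoc)
    then show ?thesis using nb[of "matrix_inv A *v x"] m by (simp add: field_simps)
  qed
qed


lemma grad_zero_at_min:
  fixes F :: "real^'n \<Rightarrow> real"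
  assumes "\<And>w. (F has_derivative (\<lambda>h. gF w \<bullet> h)) (at w)" "\<And>w. F ws \<le> F w"
  shows "gF ws = 0"
proof -
  have "(\<lambda>h. gF ws \<bullet> h) = (\<lambda>h. 0)"
    by (rule has_derivative_local_min[OF assms(1)]) (simp add: assms(2))
  then have "gF ws \<bullet> gF ws = 0" by metis
  then show ?thesis by simp
qed

lemma mat_onorm_bound:
  fixes A :: "real^'n^'n"
  shows "norm (A *v x) \<le> onorm (\<lambda>x. A *v x) * norm x"
  using onorm[OF matrix_vector_mul_bounded_linear[of A]] by simp

lemma taylor_bound:
  fixes gF :: "real^'n \<Rightarrow> real^'n" and HF :: "real^'n \<Rightarrow> real^'n^'n"
  assumes gd: "\<And>w. (gF has_derivative (\<lambda>h. HF w *v h)) (at w)"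
    and lip: "\<And>w u. onorm (\<lambda>x. (HF w - HF u) *v x) \<le> M * norm (w - u)"
    and z: "gF ws = 0" and M0: "M \<ge> 0"
  shows "norm (HF w *v (w - ws) - gF w) \<le> M / 2 * norm (w - ws)^2"
proof (cases "HF w *v (w - ws) - gF w = 0")
  case True
  then show ?thesis using M0 by simp
next
  case False
  define d where "d = w - ws"
  define R where "R = HF w *v d - gF w"
  define u where "u = R /\<^sub>R norm R"
  have R0: "R \<noteq> 0" using False by (simp add: R_def d_def)
  define \<psi> where "\<psi> t = u \<bullet> (t *\<^sub>R (HF w *v d) - gF (ws + t *\<^sub>R d)) - M * norm d ^ 2 * (t - t^2 / 2)" for t :: real
  have "\<psi> 1 \<le> \<psi> 0"
  proof (rule DERIV_nonpos_imp_nonincreasing[of 0 1])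
    fix t :: real assume t: "0 \<le> t" "t \<le> 1"
    have tr: "((\<lambda>t. ws + t *\<^sub>R d) has_derivative (\<lambda>s. s *\<^sub>R d)) (at t)"
      by (auto intro!: derivative_eq_intros)
    have c: "((\<lambda>t. gF (ws + t *\<^sub>R d)) has_derivative (\<lambda>s. HF (ws + t *\<^sub>R d) *v (s *\<^sub>R d))) (at t)"
      using has_derivative_compose[OF tr gd] by simp
    define D where "D = u \<bullet> (HF w *v d - HF (ws + t *\<^sub>R d) *v d) - M * norm d ^ 2 * (1 - t)"
    have c2: "((\<lambda>t. u \<bullet> gF (ws + t *\<^sub>R d)) has_derivative (\<lambda>s. u \<bullet> (HF (ws + t *\<^sub>R d) *v (s *\<^sub>R d)))) (at t)"
      using bounded_linear.has_derivative[OF bounded_linear_inner_right c] .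
    have e2: "(\<lambda>s. u \<bullet> (HF (ws + t *\<^sub>R d) *v (s *\<^sub>R d))) = (*) (u \<bullet> (HF (ws + t *\<^sub>R d) *v d))"
      by (rule ext) (simp add: matrix_vector_mult_scaleR)
    have c3: "((\<lambda>t. u \<bullet> gF (ws + t *\<^sub>R d)) has_real_derivative (u \<bullet> (HF (ws + t *\<^sub>R d) *v d))) (at t)"
      using c2 unfolding e2 has_field_derivative_def .
    have c4: "((\<lambda>t. u \<bullet> (t *\<^sub>R (HF w *v d))) has_real_derivative (u \<bullet> (HF w *v d))) (at t)"
      by (auto intro!: derivative_eq_intros)
    have c5: "((\<lambda>t. M * norm d ^ 2 * (t - t^2 / 2)) has_real_derivative (M * norm d ^ 2 * (1 - t))) (at t)"
      by (auto intro!: derivative_eq_intros)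
    have "(\<psi> has_real_derivative (u \<bullet> (HF w *v d) - u \<bullet> (HF (ws + t *\<^sub>R d) *v d) - M * norm d ^ 2 * (1 - t))) (at t)"
      unfolding \<psi>_def inner_diff_right by (intro DERIV_diff c3 c4 c5)
    moreover have "(u \<bullet> (HF w *v d) - u \<bullet> (HF (ws + t *\<^sub>R d) *v d) - M * norm d ^ 2 * (1 - t)) = D"
      by (simp add: D_def inner_diff_right)
    ultimately have "(\<psi> has_real_derivative D) (at t)" by simp
    moreover have "D \<le> 0"
    proof -
      have nu: "norm u = 1" using R0 by (simp add: u_def)
      have "u \<bullet> (HF w *v d - HF (ws + t *\<^sub>R d) *v d) \<le> norm (HF w *v d - HF (ws + t *\<^sub>R d) *v d)"
        using Cauchy_Schwarz_ineq2[of u] nu by (metis abs_le_D1 mult_1)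
      also have "\<dots> = norm ((HF w - HF (ws + t *\<^sub>R d)) *v d)" by (simp add: matrix_vector_mult_diff_rdistrib)
      also have "\<dots> \<le> onorm (\<lambda>x. (HF w - HF (ws + t *\<^sub>R d)) *v x) * norm d" by (rule mat_onorm_bound)
      also have "\<dots> \<le> M * norm (w - (ws + t *\<^sub>R d)) * norm d" by (intro mult_right_mono lip) auto
      also have "w - (ws + t *\<^sub>R d) = (1 - t) *\<^sub>R d" by (simp add: d_def algebra_simps)
      also have "M * norm ((1 - t) *\<^sub>R d) * norm d = M * norm d ^ 2 * (1 - t)"
        using t by (simp add: power2_eq_square)
      finally show ?thesis by (simp add: D_def)
    qed
    ultimately show "\<exists>y. (\<psi> has_real_derivative y) (at t) \<and> y \<le> 0" by blast
  qed simp
  moreover have "\<psi> 0 = 0" using z by (simp add: \<psi>_def)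
  moreover have "\<psi> 1 = norm R - M / 2 * norm d ^ 2"
  proof -
    have "u \<bullet> R = norm R" using R0 by (simp add: u_def power2_norm_eq_inner[symmetric] power2_eq_square)
    then show ?thesis by (simp add: \<psi>_def R_def d_def inner_diff_right)
  qed
  ultimately show ?thesis by (simp add: R_def d_def)
qed


lemma contraction_to_zero:
  fixes x c :: "nat \<Rightarrow> real"
  assumes x0: "\<And>k. 0 \<le> x k" and q: "0 \<le> q" "q < 1"
    and st: "\<And>k. x (Suc k) \<le> q * x k + c k" and c: "c \<longlonglongrightarrow> 0"
  shows "x \<longlonglongrightarrow> 0"
proof (rule LIMSEQ_I)
  fix r :: real assume r: "0 < r"
  have "eventually (\<lambda>k. c k < r * (1 - q) / 2) sequentially"
    using c r q by (intro order_tendstoD) auto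
  then obtain N where N: "\<And>k. k \<ge> N \<Longrightarrow> c k < r * (1 - q) / 2" by (auto simp: eventually_sequentially)
  have y: "x (N + k) \<le> q ^ k * x N + r / 2" for k
  proof (induction k)
    case 0 then show ?case using r by simp
  next
    case (Suc k)
    have "x (N + Suc k) \<le> q * x (N + k) + c (N + k)" using st[of "N + k"] by simp
    also have "\<dots> \<le> q * (q ^ k * x N + r / 2) + r * (1 - q) / 2"
      using Suc.IH N[of "N + k"] q by (intro add_mono mult_left_mono) auto
    also have "\<dots> = q ^ Suc k * x N + r / 2" by (simp add: field_simps)
    finally show ?case .
  qed
  have "(\<lambda>k. q ^ k * x N) \<longlonglongrightarrow> 0 * x N"
    by (intro tendsto_mult LIMSEQ_power_zero tendsto_const) (use q in auto)
  then have "eventually (\<lambda>k. q ^ k * x N < r / 2) sequentially" using r by (intro order_tendstoD) auto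
  then obtain K where K: "\<And>k. k \<ge> K \<Longrightarrow> q ^ k * x N < r / 2" by (auto simp: eventually_sequentially)
  show "\<exists>no. \<forall>n\<ge>no. norm (x n - 0) < r"
  proof (intro exI[of _ "N + K"] allI impI)
    fix n assume n: "n \<ge> N + K"
    then obtain k where k: "n = N + k" "k \<ge> K" by (intro that[of "n - N"]) auto
    have "x n < r" using y[of k] K[OF k(2)] k(1) by simp
    then show "norm (x n - 0) < r" using x0[of n] by simp
  qed
qed

lemma superlinear_recursion:
  fixes E b :: "nat \<Rightarrow> real" and \<eta> :: "nat \<Rightarrow> real"
  assumes A: "0 < A" and \<tau>0: "0 < \<tau>0" "A * \<tau>0 \<le> 1/6"
    and b: "\<And>k. 0 \<le> b k" "\<And>k. b k \<le> 1/4" "b \<longlonglongrightarrow> 0"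
    and K: "0 \<le> K" "K \<le> \<tau>0 / 2"
    and eta: "strict_mono \<eta>" "filterlim \<eta> at_top sequentially" "\<eta> 1 > 1"
    and E: "\<And>k. 0 \<le> E k" "E 0 \<le> \<tau>0"
      "\<And>k. E (Suc k) \<le> A * (E k)\<^sup>2 + b k * E k + K / sqrt (\<eta> k ^ k)"
  shows "\<exists>\<tau> :: nat \<Rightarrow> real. (\<forall>k. 0 < \<tau> k) \<and> (\<forall>k. E k \<le> \<tau> k) \<and> (\<lambda>k. \<tau> (Suc k) / \<tau> k) \<longlonglongrightarrow> 0"
proof -
  define c where "c k = K / sqrt (\<eta> k ^ k)" for k
  have eta_ge: "\<eta> k \<ge> \<eta> 1" if "k \<ge> 1" for k
    using eta(1) that by (simp add: strict_mono_less_eq)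
  have eta_pos: "\<eta> k > 1" if "k \<ge> 1" for k using eta_ge[OF that] eta(3) by linarith
  have etak: "\<eta> k ^ k \<ge> 1" for k
  proof (cases "k = 0")
    case False then show ?thesis using eta_pos[of k] by (simp add: one_le_power)
  qed simp
  have c0: "0 \<le> c k" for k
  proof -
    have "sqrt (\<eta> k ^ k) > 0" using etak[of k] by simp
    then show ?thesis using K by (simp add: c_def)
  qed
  have cle: "c k \<le> \<tau>0 / 2" for k
  proof -
    have "sqrt (\<eta> k ^ k) \<ge> 1" using etak[of k] by simp
    then have "K \<le> K * sqrt (\<eta> k ^ k)" using K mult_left_mono[of 1 "sqrt (\<eta> k ^ k)" K] by simp
    then have "c k \<le> K" using K \<open>sqrt (\<eta> k ^ k) \<ge> 1\<close> by (simp add: c_def divide_le_eq)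
    then show ?thesis using K by simp
  qed
  define \<tau> where "\<tau> = rec_nat \<tau>0 (\<lambda>k t. A * t\<^sup>2 + b k * t + c k)"
  have \<tau>_0: "\<tau> 0 = \<tau>0" and \<tau>_S: "\<tau> (Suc k) = A * (\<tau> k)\<^sup>2 + b k * \<tau> k + c k" for k
    by (simp_all add: \<tau>_def)
  have bnd: "0 < \<tau> k \<and> \<tau> k \<le> \<tau>0" for k
  proof (induction k)
    case 0 then show ?case using \<tau>0 by (simp add: \<tau>_0)
  next
    case (Suc k)
    have pos: "0 < A * (\<tau> k)\<^sup>2" using A Suc by simp
    have "A * (\<tau> k)\<^sup>2 \<le> A * \<tau>0 * \<tau>0"
      using Suc A by (simp add: power2_eq_square mult_mono mult.assoc)
    also have "\<dots> \<le> \<tau>0 / 6" using \<tau>0 by (simp add: mult_right_mono)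
    finally have a1: "A * (\<tau> k)\<^sup>2 \<le> \<tau>0 / 6" .
    have a2: "b k * \<tau> k \<le> \<tau>0 / 4" 
    proof -
      have "b k * \<tau> k \<le> 1/4 * \<tau> k" using b(2)[of k] Suc by (intro mult_right_mono) auto
      also have "\<dots> \<le> 1/4 * \<tau>0" using Suc by simp
      finally show ?thesis by simp
    qed
    show ?case using pos a1 a2 cle[of k] b(1)[of k] Suc c0[of k] \<tau>0
      by (simp add: \<tau>_S add_pos_nonneg mult_nonneg_nonneg)
  qed
  have Ele: "E k \<le> \<tau> k" for k
  proof (induction k)
    case 0 then show ?case using E by (simp add: \<tau>_0)
  next
    case (Suc k)
    have "A * (E k)\<^sup>2 \<le> A * (\<tau> k)\<^sup>2" using Suc E(1)[of k] A by (simp add: power_mono)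
    moreover have "b k * E k \<le> b k * \<tau> k" using Suc b(1)[of k] by (simp add: mult_left_mono)
    ultimately show ?case using E(3)[of k] by (simp add: \<tau>_S c_def)
  qed
  have etainf: "filterlim (\<lambda>k. sqrt (\<eta> k)) at_top sequentially"
    using filterlim_compose[OF sqrt_at_top eta(2)] by (simp add: o_def)
  have isq: "(\<lambda>k. 1 / sqrt (\<eta> k)) \<longlonglongrightarrow> 0"
    using tendsto_divide_0[OF tendsto_const filterlim_at_top_imp_at_infinity[OF etainf], of 1] by simp
  have cle2: "c k \<le> K * (1 / sqrt (\<eta> k))" if "k \<ge> 1" for k
  proof -
    have "\<eta> k \<le> \<eta> k ^ k" using eta_pos[OF that] that
      by (metis less_imp_le power_increasing power_one_right)
    then have "sqrt (\<eta> k) \<le> sqrt (\<eta> k ^ k)" by simp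
    moreover have "0 < sqrt (\<eta> k)" using eta_pos[OF that] by simp
    ultimately show ?thesis using K by (simp add: c_def divide_left_mono)
  qed
  have ctend: "c \<longlonglongrightarrow> 0"
  proof (rule tendsto_sandwich[of "\<lambda>_. 0" _ _ "\<lambda>k. K * (1 / sqrt (\<eta> k))"])
    show "eventually (\<lambda>k. 0 \<le> c k) sequentially" using c0 by simp
    show "eventually (\<lambda>k. c k \<le> K * (1 / sqrt (\<eta> k))) sequentially"
      using cle2 by (auto simp: eventually_sequentially intro: exI[of _ 1])
    show "(\<lambda>k. K * (1 / sqrt (\<eta> k))) \<longlonglongrightarrow> 0" using tendsto_mult[OF tendsto_const isq, of K] by simp
  qed simp
  have \<tau>tend: "\<tau> \<longlonglongrightarrow> 0"
  proof (rule contraction_to_zero[of \<tau> "5/12" c])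
    show "0 \<le> \<tau> k" for k using bnd[of k] by simp
    show "\<tau> (Suc k) \<le> 5 / 12 * \<tau> k + c k" for k
    proof -
      have "A * (\<tau> k)\<^sup>2 \<le> A * \<tau>0 * \<tau> k"
        using bnd[of k] A by (simp add: power2_eq_square mult_right_mono)
      also have "\<dots> \<le> 1/6 * \<tau> k" using \<tau>0 bnd[of k] by (simp add: mult_right_mono)
      finally have "A * (\<tau> k)\<^sup>2 \<le> 1/6 * \<tau> k" .
      moreover have "b k * \<tau> k \<le> 1/4 * \<tau> k" using b(2)[of k] bnd[of k] by (simp add: mult_right_mono)
      ultimately show ?thesis by (simp add: \<tau>_S)
    qed
  qed (auto simp: ctend)
  have ratio: "\<tau> (Suc k) / \<tau> k = A * \<tau> k + b k + c k / \<tau> k" for k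
    using bnd[of k] by (simp add: \<tau>_S power2_eq_square field_simps)
  have cr: "c k / \<tau> k \<le> 1 / sqrt (\<eta> k)" if k: "k \<ge> 2" for k
  proof (cases "K = 0")
    case True then show ?thesis using eta_pos[of k] k by (simp add: c_def)
  next
    case False
    then have Kp: "K > 0" using K by simp
    obtain j where j: "k = Suc j" "j \<ge> 1" using k by (intro that[of "k - 1"]) auto
    have tj: "c j \<le> \<tau> k" using bnd[of j] A b(1)[of j] by (simp add: j \<tau>_S)
    have cjp: "0 < c j" using Kp etak[of j] by (simp add: c_def)
    have "c k / \<tau> k \<le> c k / c j" using tj cjp c0[of k] by (simp add: divide_left_mono)
    also have "c k / c j = sqrt (\<eta> j ^ j) / sqrt (\<eta> k ^ k)"
      using Kp etak[of j] etak[of k] by (simp add: c_def field_simps)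
    also have "\<dots> \<le> sqrt (\<eta> k ^ j) / sqrt (\<eta> k ^ k)"
    proof -
      have "\<eta> j \<le> \<eta> k" using eta(1) j by (simp add: strict_mono_less_eq)
      then have "\<eta> j ^ j \<le> \<eta> k ^ j" using eta_pos[OF j(2)] by (simp add: power_mono)
      then show ?thesis using etak[of k] by (simp add: divide_right_mono)
    qed
    also have "\<dots> = 1 / sqrt (\<eta> k)"
      using eta_pos[of k] k by (simp add: j real_sqrt_mult field_simps)
    finally show ?thesis .
  qed
  have "(\<lambda>k. \<tau> (Suc k) / \<tau> k) \<longlonglongrightarrow> 0"
  proof (rule tendsto_sandwich[of "\<lambda>_. 0" _ _ "\<lambda>k. A * \<tau> k + b k + 1 / sqrt (\<eta> k)"])
    show "eventually (\<lambda>k. 0 \<le> \<tau> (Suc k) / \<tau> k) sequentially"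
      using bnd by (auto intro!: always_eventually divide_nonneg_nonneg less_imp_le)
    show "eventually (\<lambda>k. \<tau> (Suc k) / \<tau> k \<le> A * \<tau> k + b k + 1 / sqrt (\<eta> k)) sequentially"
      unfolding ratio eventually_sequentially using cr by (intro exI[of _ 2]) auto
    show "(\<lambda>k. A * \<tau> k + b k + 1 / sqrt (\<eta> k)) \<longlonglongrightarrow> 0"
      using tendsto_add[OF tendsto_add[OF tendsto_mult[OF tendsto_const \<tau>tend] b(3)] isq, of A] by simp
  qed simp
  then show ?thesis using bnd Ele by blast
qed


lemma sum_indep_sq:
  fixes X :: "'i \<Rightarrow> 'a \<Rightarrow> real"
  assumes Q: "prob_space Q" and A: "finite A"
    and ind: "\<And>i j. i \<in> A \<Longrightarrow> j \<in> A \<Longrightarrow> i \<noteq> j \<Longrightarrow> prob_space.indep_var Q borel (X i) borel (X j)"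
    and int1: "\<And>i. i \<in> A \<Longrightarrow> integrable Q (X i)"
    and int2: "\<And>i. i \<in> A \<Longrightarrow> integrable Q (\<lambda>\<omega>. (X i \<omega>)\<^sup>2)"
    and mean: "\<And>i. i \<in> A \<Longrightarrow> (\<integral>\<omega>. X i \<omega> \<partial>Q) = 0"
  shows "integrable Q (\<lambda>\<omega>. (\<Sum>i\<in>A. X i \<omega>)\<^sup>2) \<and> (\<integral>\<omega>. (\<Sum>i\<in>A. X i \<omega>)\<^sup>2 \<partial>Q) = (\<Sum>i\<in>A. \<integral>\<omega>. (X i \<omega>)\<^sup>2 \<partial>Q)"
proof -
  interpret prob_space Q by fact
  have eq: "(\<Sum>i\<in>A. X i \<omega>)\<^sup>2 = (\<Sum>i\<in>A. \<Sum>j\<in>A. X i \<omega> * X j \<omega>)" for \<omega>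
    by (simp add: power2_eq_square sum_product)
  have ij: "integrable Q (\<lambda>\<omega>. X i \<omega> * X j \<omega>) \<and> (\<integral>\<omega>. X i \<omega> * X j \<omega> \<partial>Q) = (if i = j then \<integral>\<omega>. (X i \<omega>)\<^sup>2 \<partial>Q else 0)"
    if "i \<in> A" "j \<in> A" for i j
  proof (cases "i = j")
    case True then show ?thesis using int2[OF that(1)] by (simp add: power2_eq_square)
  next
    case False
    have "integrable Q (\<lambda>\<omega>. X i \<omega> * X j \<omega>)"
      by (rule indep_var_integrable[OF ind[OF that False] int1[OF that(1)] int1[OF that(2)]])
    moreover have "(\<integral>\<omega>. X i \<omega> * X j \<omega> \<partial>Q) = 0"
      using indep_var_lebesgue_integral[OF ind[OF that False] int1[OF that(1)] int1[OF that(2)]] mean that by simp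
    ultimately show ?thesis using False by simp
  qed
  have I: "integrable Q (\<lambda>\<omega>. \<Sum>i\<in>A. \<Sum>j\<in>A. X i \<omega> * X j \<omega>)"
  proof (rule Bochner_Integration.integrable_sum)
    fix i assume i: "i \<in> A"
    show "integrable Q (\<lambda>\<omega>. \<Sum>j\<in>A. X i \<omega> * X j \<omega>)"
    proof (rule Bochner_Integration.integrable_sum)
      fix j assume "j \<in> A"
      then show "integrable Q (\<lambda>\<omega>. X i \<omega> * X j \<omega>)" using ij i by blast
    qed
  qed
  have "(\<integral>\<omega>. (\<Sum>i\<in>A. \<Sum>j\<in>A. X i \<omega> * X j \<omega>) \<partial>Q) = (\<Sum>i\<in>A. \<Sum>j\<in>A. \<integral>\<omega>. X i \<omega> * X j \<omega> \<partial>Q)"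
    using ij by (simp add: integral_sum Bochner_Integration.integrable_sum)
  also have "\<dots> = (\<Sum>i\<in>A. \<Sum>j\<in>A. (if i = j then \<integral>\<omega>. (X i \<omega>)\<^sup>2 \<partial>Q else 0))"
    using ij by (intro sum.cong refl) auto
  also have "\<dots> = (\<Sum>i\<in>A. \<integral>\<omega>. (X i \<omega>)\<^sup>2 \<partial>Q)"
    using A by (simp add: sum.delta)
  finally show ?thesis using I unfolding eq by simp
qed

lemma prob_sq_le:
  fixes f :: "'a \<Rightarrow> real"
  assumes Q: "prob_space Q" and f: "integrable Q f" "integrable Q (\<lambda>x. (f x)\<^sup>2)"
  shows "(\<integral>x. f x \<partial>Q)\<^sup>2 \<le> (\<integral>x. (f x)\<^sup>2 \<partial>Q)"
proof -
  interpret prob_space Q by fact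
  define c where "c = (\<integral>x. f x \<partial>Q)"
  have e: "(\<lambda>x. (f x - c)\<^sup>2) = (\<lambda>x. (f x)\<^sup>2 - 2 * c * f x + c\<^sup>2)"
    by (simp add: power2_eq_square algebra_simps)
  have "0 \<le> (\<integral>x. (f x - c)\<^sup>2 \<partial>Q)" by simp
  also have "\<dots> = (\<integral>x. (f x)\<^sup>2 \<partial>Q) - 2 * c * c + c\<^sup>2"
    unfolding e using f by (simp add: c_def prob_space)
  finally show ?thesis by (simp add: c_def power2_eq_square)
qed


lemma norm_sq_vec: "(norm (x :: real^'n))\<^sup>2 = (\<Sum>c\<in>UNIV. (x $ c)\<^sup>2)"
  unfolding power2_norm_eq_inner inner_vec_def by (simp add: power2_eq_square)

lemma vec_var_bound:
  fixes Y :: "'i \<Rightarrow> 'a \<Rightarrow> real^'n"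
  assumes Q: "prob_space Q" and A: "finite A" "A \<noteq> {}"
    and ind: "\<And>i j c. i \<in> A \<Longrightarrow> j \<in> A \<Longrightarrow> i \<noteq> j \<Longrightarrow>
      prob_space.indep_var Q borel (\<lambda>\<omega>. Y i \<omega> $ c) borel (\<lambda>\<omega>. Y j \<omega> $ c)"
    and meas: "\<And>i. i \<in> A \<Longrightarrow> Y i \<in> borel_measurable Q"
    and int1: "\<And>i. i \<in> A \<Longrightarrow> integrable Q (Y i)"
    and int2: "\<And>i. i \<in> A \<Longrightarrow> integrable Q (\<lambda>\<omega>. (norm (Y i \<omega>))\<^sup>2)"
    and mean: "\<And>i. i \<in> A \<Longrightarrow> (\<integral>\<omega>. Y i \<omega> \<partial>Q) = 0"
    and var: "\<And>i. i \<in> A \<Longrightarrow> (\<integral>\<omega>. (norm (Y i \<omega>))\<^sup>2 \<partial>Q) \<le> V"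
  shows "(\<integral>\<^sup>+\<omega>. ennreal (norm ((1 / real (card A)) *\<^sub>R (\<Sum>i\<in>A. Y i \<omega>))) \<partial>Q) \<le> ennreal (sqrt (V / real (card A)))"
proof -
  interpret prob_space Q by fact
  define n where "n = real (card A)"
  have n0: "n > 0" using A by (simp add: n_def card_gt_0_iff)
  have cm: "(\<lambda>\<omega>. Y i \<omega> $ c) \<in> borel_measurable Q" if "i \<in> A" for i c
    using meas[OF that] meas_vec_iff by blast
  have ci1: "integrable Q (\<lambda>\<omega>. Y i \<omega> $ c)" if "i \<in> A" for i c
    using integrable_bounded_linear[OF bounded_linear_vec_nth int1[OF that]] by simp
  have ci2: "integrable Q (\<lambda>\<omega>. (Y i \<omega> $ c)\<^sup>2)" if "i \<in> A" for i c
  proof (rule Bochner_Integration.integrable_bound[OF int2[OF that]])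
    show "(\<lambda>\<omega>. (Y i \<omega> $ c)\<^sup>2) \<in> borel_measurable Q" using cm[OF that] by measurable
    show "AE \<omega> in Q. norm ((Y i \<omega> $ c)\<^sup>2) \<le> norm ((norm (Y i \<omega>))\<^sup>2)"
    proof (rule AE_I2)
      fix \<omega>
      have "\<bar>Y i \<omega> $ c\<bar> \<le> norm (Y i \<omega>)" using component_le_norm_cart[of "Y i \<omega>" c] by simp
      then show "norm ((Y i \<omega> $ c)\<^sup>2) \<le> norm ((norm (Y i \<omega>))\<^sup>2)"
        using abs_le_square_iff[of "Y i \<omega> $ c" "norm (Y i \<omega>)"] by simp
    qed
  qed
  have cmean: "(\<integral>\<omega>. Y i \<omega> $ c \<partial>Q) = 0" if "i \<in> A" for i c
    using integral_bounded_linear[OF bounded_linear_vec_nth int1[OF that], of c] mean[OF that] by simp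
  have comp: "integrable Q (\<lambda>\<omega>. (\<Sum>i\<in>A. Y i \<omega> $ c)\<^sup>2) \<and> (\<integral>\<omega>. (\<Sum>i\<in>A. Y i \<omega> $ c)\<^sup>2 \<partial>Q) = (\<Sum>i\<in>A. \<integral>\<omega>. (Y i \<omega> $ c)\<^sup>2 \<partial>Q)" for c
    by (rule sum_indep_sq[OF Q A(1) ind ci1 ci2 cmean])
  define S where "S \<omega> = (\<Sum>i\<in>A. Y i \<omega>)" for \<omega>
  have nS: "(norm (S \<omega>))\<^sup>2 = (\<Sum>c\<in>UNIV. (\<Sum>i\<in>A. Y i \<omega> $ c)\<^sup>2)" for \<omega>
    by (simp add: norm_sq_vec S_def sum_component)
  have S2int: "integrable Q (\<lambda>\<omega>. (norm (S \<omega>))\<^sup>2)"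
    unfolding nS using comp by (intro Bochner_Integration.integrable_sum) auto
  have "(\<integral>\<omega>. (norm (S \<omega>))\<^sup>2 \<partial>Q) = (\<Sum>c\<in>UNIV. \<integral>\<omega>. (\<Sum>i\<in>A. Y i \<omega> $ c)\<^sup>2 \<partial>Q)"
    unfolding nS using comp by (simp add: integral_sum)
  also have "\<dots> = (\<Sum>c\<in>UNIV. \<Sum>i\<in>A. \<integral>\<omega>. (Y i \<omega> $ c)\<^sup>2 \<partial>Q)" using comp by simp
  also have "\<dots> = (\<Sum>i\<in>A. \<integral>\<omega>. (\<Sum>c\<in>UNIV. (Y i \<omega> $ c)\<^sup>2) \<partial>Q)"
    by (subst sum.swap) (simp add: integral_sum ci2)
  also have "\<dots> = (\<Sum>i\<in>A. \<integral>\<omega>. (norm (Y i \<omega>))\<^sup>2 \<partial>Q)" by (simp add: norm_sq_vec)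
  also have "\<dots> \<le> (\<Sum>i\<in>A. V)" by (intro sum_mono var)
  also have "\<dots> = n * V" by (simp add: n_def)
  finally have ES2: "(\<integral>\<omega>. (norm (S \<omega>))\<^sup>2 \<partial>Q) \<le> n * V" .
  have Smeas: "S \<in> borel_measurable Q" unfolding S_def using meas by (intro borel_measurable_sum) auto
  have Sint: "integrable Q (\<lambda>\<omega>. norm (S \<omega>))"
    by (rule finite_measure.square_integrable_imp_integrable[OF finite_measure_axioms]) (use Smeas S2int in auto)
  have "(\<integral>\<omega>. norm (S \<omega>) \<partial>Q)\<^sup>2 \<le> n * V"
    using prob_sq_le[OF Q Sint] S2int ES2 by simp
  then have ES: "(\<integral>\<omega>. norm (S \<omega>) \<partial>Q) \<le> sqrt (n * V)"
    using real_le_rsqrt by blast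
  have r1: "(\<integral>\<omega>. norm ((1 / n) *\<^sub>R S \<omega>) \<partial>Q) = (1 / n) * (\<integral>\<omega>. norm (S \<omega>) \<partial>Q)"
    using n0 by simp
  have r2: "(1 / n) * (\<integral>\<omega>. norm (S \<omega>) \<partial>Q) \<le> (1 / n) * sqrt (n * V)" using ES n0 by (simp add: divide_right_mono)
  have r3: "(1 / n) * sqrt (n * V) = sqrt (V / n)"
  proof -
    have sn: "sqrt n * sqrt n = n" using n0 by simp
    have "(1 / n) * sqrt (n * V) = sqrt n * sqrt V / (sqrt n * sqrt n)" using n0 by (simp add: sn real_sqrt_mult)
    also have "\<dots> = sqrt V / sqrt n" using n0 by (simp add: field_simps)
    also have "\<dots> = sqrt (V / n)" by (simp add: real_sqrt_divide)
    finally show ?thesis .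
  qed
  have Sint': "integrable Q (\<lambda>\<omega>. norm ((1 / n) *\<^sub>R S \<omega>))" using Sint by simp
  have "(\<integral>\<^sup>+\<omega>. ennreal (norm ((1 / n) *\<^sub>R S \<omega>)) \<partial>Q) = ennreal (\<integral>\<omega>. norm ((1 / n) *\<^sub>R S \<omega>) \<partial>Q)"
    by (rule nn_integral_eq_integral[OF Sint']) simp
  also have "\<dots> \<le> ennreal (sqrt (V / n))" using r1 r2 r3 by (intro ennreal_leI) linarith
  finally have fin: "(\<integral>\<^sup>+\<omega>. ennreal (norm ((1 / n) *\<^sub>R S \<omega>)) \<partial>Q) \<le> ennreal (sqrt (V / n))" .
  show ?thesis using fin by (simp only: S_def n_def)
qed


lemma decouple:
  fixes Z :: "'i \<Rightarrow> 'a \<Rightarrow> 'z" and G :: "('i \<Rightarrow> 'z) \<Rightarrow> 'w::topological_space"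
    and h :: "'w \<Rightarrow> ('i \<Rightarrow> 'z) \<Rightarrow> ennreal" and \<beta> :: "'w \<Rightarrow> ennreal"
  assumes Q: "prob_space Q"
    and ind: "prob_space.indep_vars Q (\<lambda>_. P) Z I"
    and JB: "J \<subseteq> I" "B \<subseteq> I" "J \<inter> B = {}"
    and Gm: "G \<in> borel_measurable (PiM J (\<lambda>_. P))"
    and hm: "(\<lambda>p. h (fst p) (snd p)) \<in> borel_measurable (borel \<Otimes>\<^sub>M PiM B (\<lambda>_. P))"
    and bnd: "\<And>w. (\<integral>\<^sup>+\<omega>. h w (restrict (\<lambda>j. Z j \<omega>) B) \<partial>Q) \<le> \<beta> w"
    and \<beta>m: "\<beta> \<in> borel_measurable borel"
  shows "(\<integral>\<^sup>+\<omega>. h (G (restrict (\<lambda>j. Z j \<omega>) J)) (restrict (\<lambda>j. Z j \<omega>) B) \<partial>Q)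
         \<le> (\<integral>\<^sup>+\<omega>. \<beta> (G (restrict (\<lambda>j. Z j \<omega>) J)) \<partial>Q)"
proof -
  interpret Q: prob_space Q by fact
  define U where "U \<omega> = restrict (\<lambda>j. Z j \<omega>) J" for \<omega>
  define V where "V \<omega> = restrict (\<lambda>j. Z j \<omega>) B" for \<omega>
  let ?PJ = "PiM J (\<lambda>_. P)" and ?PB = "PiM B (\<lambda>_. P)"
  have iv: "Q.indep_var ?PJ U ?PB V"
    unfolding U_def V_def by (rule Q.indep_var_restrict[OF ind JB(3) JB(1) JB(2)])
  then have rvU: "U \<in> measurable Q ?PJ" and rvV: "V \<in> measurable Q ?PB"
    and deq: "distr Q ?PJ U \<Otimes>\<^sub>M distr Q ?PB V = distr Q (?PJ \<Otimes>\<^sub>M ?PB) (\<lambda>x. (U x, V x))"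
    using Q.indep_var_distribution_eq[THEN iffD1, OF iv] by simp_all
  define DU where "DU = distr Q ?PJ U"
  define DV where "DV = distr Q ?PB V"
  interpret DU: prob_space DU unfolding DU_def by (rule Q.prob_space_distr[OF rvU])
  interpret DV: prob_space DV unfolding DV_def by (rule Q.prob_space_distr[OF rvV])
  define F where "F p = h (G (fst p)) (snd p)" for p
  have pm: "(\<lambda>p. (G (fst p), snd p)) \<in> measurable (?PJ \<Otimes>\<^sub>M ?PB) (borel \<Otimes>\<^sub>M ?PB)"
    by (intro measurable_Pair measurable_compose[OF measurable_fst Gm] measurable_snd)
  have Fm: "F \<in> borel_measurable (?PJ \<Otimes>\<^sub>M ?PB)"
    using measurable_compose[OF pm hm] unfolding F_def[abs_def] by (simp add: comp_def)
  have UVm: "(\<lambda>x. (U x, V x)) \<in> measurable Q (?PJ \<Otimes>\<^sub>M ?PB)"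
    using rvU rvV by (rule measurable_Pair)
  have "(\<integral>\<^sup>+\<omega>. h (G (U \<omega>)) (V \<omega>) \<partial>Q) = (\<integral>\<^sup>+p. F p \<partial>distr Q (?PJ \<Otimes>\<^sub>M ?PB) (\<lambda>x. (U x, V x)))"
  proof -
    have Fm': "F \<in> borel_measurable (distr Q (?PJ \<Otimes>\<^sub>M ?PB) (\<lambda>x. (U x, V x)))" using Fm by simp
    show ?thesis by (subst nn_integral_distr[OF UVm Fm']) (simp add: F_def)
  qed
  also have "\<dots> = (\<integral>\<^sup>+p. F p \<partial>(DU \<Otimes>\<^sub>M DV))" unfolding DU_def DV_def deq ..
  also have "\<dots> = (\<integral>\<^sup>+u. \<integral>\<^sup>+v. F (u, v) \<partial>DV \<partial>DU)"
  proof -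
    have "F \<in> borel_measurable (DU \<Otimes>\<^sub>M DV)"
      using Fm by (simp add: DU_def DV_def)
    then show ?thesis by (rule DV.nn_integral_fst[symmetric])
  qed
  also have "\<dots> \<le> (\<integral>\<^sup>+u. \<beta> (G u) \<partial>DU)"
  proof (rule nn_integral_mono)
    fix u
    have hw: "(\<lambda>v. h (G u) v) \<in> borel_measurable ?PB"
      using measurable_compose[OF measurable_Pair[OF measurable_const[of "G u"] measurable_ident_sets[OF refl]] hm]
      by simp
    have "(\<integral>\<^sup>+v. F (u, v) \<partial>DV) = (\<integral>\<^sup>+\<omega>. h (G u) (V \<omega>) \<partial>Q)"
    proof -
      have hw': "(\<lambda>v. h (G u) v) \<in> borel_measurable (distr Q ?PB V)" using hw by simp
      show ?thesis unfolding DV_def F_def by (simp add: nn_integral_distr[OF rvV hw'])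
    qed
    also have "\<dots> \<le> \<beta> (G u)" using bnd[of "G u"] by (simp add: V_def)
    finally show "(\<integral>\<^sup>+v. F (u, v) \<partial>DV) \<le> \<beta> (G u)" .
  qed
  also have "\<dots> = (\<integral>\<^sup>+\<omega>. \<beta> (G (U \<omega>)) \<partial>Q)"
  proof -
    have "(\<lambda>u. \<beta> (G u)) \<in> borel_measurable (distr Q ?PJ U)"
      using measurable_compose[OF Gm \<beta>m] by (simp add: comp_def)
    then show ?thesis unfolding DU_def by (simp add: nn_integral_distr[OF rvU])
  qed
  finally show ?thesis by (simp add: U_def V_def)
qed


lemma block_var:
  fixes Z :: "'i \<Rightarrow> 'a \<Rightarrow> 'z" and \<phi> :: "'z \<Rightarrow> real^'n" and a :: "nat \<Rightarrow> 'i"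
  assumes Q: "prob_space Q"
    and ind: "prob_space.indep_vars Q (\<lambda>_. P) Z I"
    and Zm: "\<And>j. j \<in> I \<Longrightarrow> Z j \<in> measurable Q P"
    and Zd: "\<And>j. j \<in> I \<Longrightarrow> distr Q P (Z j) = P"
    and a: "inj_on a {..<n}" "a ` {..<n} \<subseteq> I" and n: "n > 0"
    and \<phi>m: "\<phi> \<in> borel_measurable P" and \<phi>i: "integrable P \<phi>" "integrable P (\<lambda>z. (norm (\<phi> z))\<^sup>2)"
    and \<phi>0: "(\<integral>z. \<phi> z \<partial>P) = 0" and \<phi>V: "(\<integral>z. (norm (\<phi> z))\<^sup>2 \<partial>P) \<le> V"
  shows "(\<integral>\<^sup>+\<omega>. ennreal (norm ((1 / real n) *\<^sub>R (\<Sum>i<n. \<phi> (Z (a i) \<omega>)))) \<partial>Q) \<le> ennreal (sqrt (V / real n))"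
proof -
  interpret Q: prob_space Q by fact
  have aI: "a i \<in> I" if "i < n" for i using a(2) that by auto
  have Ym: "(\<lambda>\<omega>. \<phi> (Z (a i) \<omega>)) \<in> borel_measurable Q" if "i < n" for i
    using measurable_compose[OF Zm[OF aI[OF that]] \<phi>m] by (simp add: comp_def)
  have \<phi>c: "(\<lambda>z. \<phi> z $ c) \<in> borel_measurable P" for c using \<phi>m meas_vec_iff by blast
  have indij: "Q.indep_var borel (\<lambda>\<omega>. \<phi> (Z (a i) \<omega>) $ c) borel (\<lambda>\<omega>. \<phi> (Z (a j) \<omega>) $ c)"
    if "i < n" "j < n" "i \<noteq> j" for i j c
  proof -
    have ne: "a i \<noteq> a j" using a(1) that by (auto simp: inj_on_def)
    have iv: "Q.indep_var (PiM {a i} (\<lambda>_. P)) (\<lambda>\<omega>. restrict (\<lambda>k. Z k \<omega>) {a i})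
                          (PiM {a j} (\<lambda>_. P)) (\<lambda>\<omega>. restrict (\<lambda>k. Z k \<omega>) {a j})"
      by (rule Q.indep_var_restrict[OF ind]) (use ne aI[OF that(1)] aI[OF that(2)] in auto)
    have m1: "(\<lambda>x. \<phi> (x (a i)) $ c) \<in> borel_measurable (PiM {a i} (\<lambda>_. P))"
      using measurable_compose[OF measurable_component_singleton[of "a i" "{a i}" "\<lambda>_. P"] \<phi>c[of c]]
      by (simp add: comp_def)
    have m2: "(\<lambda>x. \<phi> (x (a j)) $ c) \<in> borel_measurable (PiM {a j} (\<lambda>_. P))"
      using measurable_compose[OF measurable_component_singleton[of "a j" "{a j}" "\<lambda>_. P"] \<phi>c[of c]]
      by (simp add: comp_def)
    show ?thesis using Q.indep_var_compose[OF iv m1 m2] by (simp add: comp_def)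
  qed
  have tr: "integrable Q (\<lambda>\<omega>. f (Z (a i) \<omega>)) \<and> (\<integral>\<omega>. f (Z (a i) \<omega>) \<partial>Q) = (\<integral>z. f z \<partial>P)"
    if "i < n" "f \<in> borel_measurable P" "integrable P f" for i and f :: "'z \<Rightarrow> 'b::{banach,second_countable_topology}"
  proof -
    have fm: "f \<in> borel_measurable (distr Q P (Z (a i)))" using that(2) by simp
    have "integrable (distr Q P (Z (a i))) f" using that(3) Zd[OF aI[OF that(1)]] by simp
    then have "integrable Q (\<lambda>\<omega>. f (Z (a i) \<omega>))"
      using integrable_distr_eq[OF Zm[OF aI[OF that(1)]] that(2)] by simp
    moreover have "(\<integral>\<omega>. f (Z (a i) \<omega>) \<partial>Q) = (\<integral>z. f z \<partial>P)"
      using integral_distr[OF Zm[OF aI[OF that(1)]] that(2)] Zd[OF aI[OF that(1)]] by simp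
    ultimately show ?thesis by simp
  qed
  have n2m: "(\<lambda>z. (norm (\<phi> z))\<^sup>2) \<in> borel_measurable P" using \<phi>m by measurable
  have "(\<integral>\<^sup>+\<omega>. ennreal (norm ((1 / real (card {..<n})) *\<^sub>R (\<Sum>i\<in>{..<n}. \<phi> (Z (a i) \<omega>)))) \<partial>Q)
        \<le> ennreal (sqrt (V / real (card {..<n})))"
  proof (rule vec_var_bound[OF Q])
    show "finite {..<n}" "{..<n} \<noteq> {}" using n by auto
    show "\<And>i j c. i \<in> {..<n} \<Longrightarrow> j \<in> {..<n} \<Longrightarrow> i \<noteq> j \<Longrightarrow>
      Q.indep_var borel (\<lambda>\<omega>. \<phi> (Z (a i) \<omega>) $ c) borel (\<lambda>\<omega>. \<phi> (Z (a j) \<omega>) $ c)"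
      using indij by auto
    show "\<And>i. i \<in> {..<n} \<Longrightarrow> (\<lambda>\<omega>. \<phi> (Z (a i) \<omega>)) \<in> borel_measurable Q" using Ym by auto
    show "\<And>i. i \<in> {..<n} \<Longrightarrow> integrable Q (\<lambda>\<omega>. \<phi> (Z (a i) \<omega>))" using tr[OF _ \<phi>m \<phi>i(1)] by auto
    show "\<And>i. i \<in> {..<n} \<Longrightarrow> integrable Q (\<lambda>\<omega>. (norm (\<phi> (Z (a i) \<omega>)))\<^sup>2)"
      using tr[OF _ n2m \<phi>i(2)] by auto
    show "\<And>i. i \<in> {..<n} \<Longrightarrow> (\<integral>\<omega>. \<phi> (Z (a i) \<omega>) \<partial>Q) = 0" using tr[OF _ \<phi>m \<phi>i(1)] \<phi>0 by auto
    show "\<And>i. i \<in> {..<n} \<Longrightarrow> (\<integral>\<omega>. (norm (\<phi> (Z (a i) \<omega>)))\<^sup>2 \<partial>Q) \<le> V"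
      using tr[OF _ n2m \<phi>i(2)] \<phi>V by auto
  qed
  then show ?thesis by simp
qed


lemma meas_mv:
  fixes A :: "'b \<Rightarrow> real^'n^'m" and v :: "'b \<Rightarrow> real^'n"
  assumes "A \<in> borel_measurable N" "v \<in> borel_measurable N"
  shows "(\<lambda>x. A x *v v x) \<in> borel_measurable N"
proof -
  have vi: "(\<lambda>x. v x $ j) \<in> borel_measurable N" for j using assms(2) meas_vec_iff by blast
  have "(\<lambda>x. (A x *v v x) $ i) \<in> borel_measurable N" for i
    unfolding matrix_vector_mult_def
    by (simp, intro borel_measurable_sum borel_measurable_times meas_mat_entry[OF assms(1)] vi)
  then show ?thesis using meas_vec_iff by blast
qed

lemma bl_mv_left: "bounded_linear (\<lambda>A :: real^'n^'m. A *v d)"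
  unfolding linear_conv_bounded_linear[symmetric]
  by (rule linearI) (simp_all add: matrix_vector_mult_add_rdistrib matrix_vector_mult_scaleR
      scaleR_matrix_vector_assoc)

lemma bl_quad: "bounded_linear (\<lambda>A :: real^'n^'n. (A *v d) \<bullet> d)"
  unfolding linear_conv_bounded_linear[symmetric]
  by (rule linearI) (simp_all add: matrix_vector_mult_add_rdistrib inner_add_left
      scaleR_matrix_vector_assoc[symmetric])


lemma sum_mv: "(\<Sum>i\<in>A. B i) *v (d :: real^'n) = (\<Sum>i\<in>A. (B i :: real^'n^'m) *v d)"
  by (induction A rule: infinite_finite_induct) (simp_all add: matrix_vector_mult_add_rdistrib)

lemma sn_iter_cong:
  assumes "\<And>j. j \<in> sample_index nX nS \<Longrightarrow> fst (snd j) < k \<Longrightarrow> Z1 j a = Z2 j b"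
  shows "sn_iter w0 grad hess Z1 nX nS k a = sn_iter w0 grad hess Z2 nX nS k b"
  using assms
proof (induction k)
  case 0 then show ?case by simp
next
  case (Suc k)
  have IH: "sn_iter w0 grad hess Z1 nX nS k a = sn_iter w0 grad hess Z2 nX nS k b"
    using Suc.prems by (intro Suc.IH) auto
  have h: "Z1 (True, k, i) a = Z2 (True, k, i) b" if "i < nS k" for i
    using Suc.prems[of "(True, k, i)"] that by (simp add: sample_index_def)
  have g: "Z1 (False, k, i) a = Z2 (False, k, i) b" if "i < nX k" for i
    using Suc.prems[of "(False, k, i)"] that by (simp add: sample_index_def)
  have s1: "(\<Sum>x<nS k. hess w (Z1 (True, k, x) a)) = (\<Sum>x<nS k. hess w (Z2 (True, k, x) b))" for w
    using h by (intro sum.cong) auto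
  have s2: "(\<Sum>x<nX k. grad w (Z1 (False, k, x) a)) = (\<Sum>x<nX k. grad w (Z2 (False, k, x) b))" for w
    using g by (intro sum.cong) auto
  show ?case
    by (simp add: IH sample_hess_def sample_grad_def s1 s2)
qed


theorem theorem2p4:
  fixes P :: "'z measure" and Q :: "'a measure"
    and f :: "real^'n \<Rightarrow> 'z \<Rightarrow> real"
    and grad :: "real^'n \<Rightarrow> 'z \<Rightarrow> real^'n"
    and hess :: "real^'n \<Rightarrow> 'z \<Rightarrow> real^'n^'n"
    and F :: "real^'n \<Rightarrow> real" and gF :: "real^'n \<Rightarrow> real^'n" and HF :: "real^'n \<Rightarrow> real^'n^'n"
    and wstar w0 :: "real^'n"
    and Z :: "bool \<times> nat \<times> nat \<Rightarrow> 'a \<Rightarrow> 'z"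
    and nX nS :: "nat \<Rightarrow> nat" and \<eta> :: "nat \<Rightarrow> real"
    and \<mu>bar Lbar \<mu> L v M \<sigma> \<gamma> :: real
  assumes probP: "prob_space P" and probQ: "prob_space Q"
    \<comment> \<open>the loss, its per-sample gradient and Hessian\<close>
    and f_int: "\<And>w. integrable P (f w)"
    and F_def: "\<And>w. F w = (\<integral>z. f w z \<partial>P)"
    and f_deriv: "\<And>w z. z \<in> space P \<Longrightarrow> ((\<lambda>u. f u z) has_derivative (\<lambda>h. grad w z \<bullet> h)) (at w)"
    and grad_deriv: "\<And>w z. z \<in> space P \<Longrightarrow> ((\<lambda>u. grad u z) has_derivative (\<lambda>h. hess w z *v h)) (at w)"
    and grad_meas: "(\<lambda>(w, z). grad w z) \<in> borel_measurable (borel \<Otimes>\<^sub>M P)"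
    and hess_meas: "(\<lambda>(w, z). hess w z) \<in> borel_measurable (borel \<Otimes>\<^sub>M P)"
    \<comment> \<open>F twice continuously differentiable; sample gradients/Hessians unbiased\<close>
    and F_deriv: "\<And>w. (F has_derivative (\<lambda>h. gF w \<bullet> h)) (at w)"
    and gF_deriv: "\<And>w. (gF has_derivative (\<lambda>h. HF w *v h)) (at w)"
    and HF_cont: "continuous_on UNIV HF"
    and grad_int: "\<And>w. integrable P (grad w)"
    and gF_unbiased: "\<And>w. gF w = (\<integral>z. grad w z \<partial>P)"
    and hess_int: "\<And>w. integrable P (hess w)"
    and HF_unbiased: "\<And>w. HF w = (\<integral>z. hess w z \<partial>P)"
    \<comment> \<open>w* is the unique minimizer of F\<close>
    and wstar_min: "\<And>w. F wstar \<le> F w"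
    and wstar_unique: "\<And>w. (\<forall>u. F w \<le> F u) \<Longrightarrow> w = wstar"
    \<comment> \<open>Assumption A1\<close>
    and A1_bar: "0 < \<mu>bar"
    and A1_sub: "\<And>\<beta>. 0 < \<beta> \<Longrightarrow> \<exists>\<mu>\<beta> L\<beta>. 0 < \<mu>\<beta> \<and> \<mu>\<beta> \<le> L\<beta> \<and> \<mu>bar \<le> \<mu>\<beta> \<and> L\<beta> \<le> Lbar \<and>
        (\<forall>w zs. length zs = \<beta> \<and> set zs \<subseteq> space P \<longrightarrow>
           loewner_le (mat \<mu>\<beta>) ((1 / real \<beta>) *\<^sub>R (\<Sum>z\<leftarrow>zs. hess w z)) \<and>
           loewner_le ((1 / real \<beta>) *\<^sub>R (\<Sum>z\<leftarrow>zs. hess w z)) (mat L\<beta>))"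
    and A1_F: "0 < \<mu>" "\<mu> \<le> L" "\<And>w. loewner_le (mat \<mu>) (HF w) \<and> loewner_le (HF w) (mat L)"
    \<comment> \<open>Assumption A2: tr Cov(grad F_i(w)) = E ||grad F_i(w) - grad F(w)||^2 \<le> v^2\<close>
    and A2: "0 \<le> v" "\<And>w. integrable P (\<lambda>z. (norm (grad w z - gF w))\<^sup>2)"
      "\<And>w. (\<integral>z. (norm (grad w z - gF w))\<^sup>2 \<partial>P) \<le> v\<^sup>2"
    \<comment> \<open>Assumption A3 (operator norm)\<close>
    and A3: "0 < M" "\<And>w u. onorm (\<lambda>x. (HF w - HF u) *v x) \<le> M * norm (w - u)"
    \<comment> \<open>Assumption A4\<close>
    and A4: "0 \<le> \<sigma>" "\<And>w. integrable P (\<lambda>z. (hess w z - HF w) ** (hess w z - HF w))"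
      "\<And>w. onorm (\<lambda>x. (\<integral>z. (hess w z - HF w) ** (hess w z - HF w) \<partial>P) *v x) \<le> \<sigma>\<^sup>2"
    \<comment> \<open>samples: independent points drawn from P\<close>
    and Z_meas: "\<And>j. j \<in> sample_index nX nS \<Longrightarrow> Z j \<in> measurable Q P"
    and Z_distr: "\<And>j. j \<in> sample_index nX nS \<Longrightarrow> distr Q P (Z j) = P"
    and Z_indep: "prob_space.indep_vars Q (\<lambda>_. P) Z (sample_index nX nS)"
    \<comment> \<open>Assumption B1 on the iterates\<close>
    and B1: "0 < \<gamma>"
      "\<And>k. integrable Q (\<lambda>\<omega>. (norm (sn_iter w0 grad hess Z nX nS k \<omega> - wstar))\<^sup>2)"
      "\<And>k. (\<integral>\<omega>. (norm (sn_iter w0 grad hess Z nX nS k \<omega> - wstar))\<^sup>2 \<partial>Q)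
             \<le> \<gamma> * (\<integral>\<omega>. norm (sn_iter w0 grad hess Z nX nS k \<omega> - wstar) \<partial>Q)\<^sup>2"
    \<comment> \<open>sample size conditions (i) and (ii)\<close>
    and nX_pos: "\<And>k. 0 < nX k" and nS0_pos: "0 < nS 0"
    and cond_i: "\<And>k. real (nX k) \<ge> real (nX 0) * \<eta> k ^ k"
      "real (nX 0) \<ge> (6 * v * \<gamma> * M / \<mu>bar\<^sup>2)\<^sup>2"
      "strict_mono \<eta>" "filterlim \<eta> at_top sequentially" "\<eta> 1 > 1"
    and cond_ii: "strict_mono nS" "filterlim nS at_top sequentially"
      "real (nS 0) \<ge> (4 * \<sigma> / \<mu>bar)\<^sup>2"
    and init: "norm (w0 - wstar) \<le> \<mu>bar / (3 * \<gamma> * M)"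
  shows "\<exists>\<tau> :: nat \<Rightarrow> real. (\<forall>k. 0 < \<tau> k) \<and>
           (\<forall>k. (\<integral>\<omega>. norm (sn_iter w0 grad hess Z nX nS k \<omega> - wstar) \<partial>Q) \<le> \<tau> k) \<and>
           (\<lambda>k. \<tau> (Suc k) / \<tau> k) \<longlonglongrightarrow> 0"
proof -
  interpret Q: prob_space Q by (rule probQ)
  interpret P: prob_space P by (rule probP)
  define I where "I = sample_index nX nS"
  define Jk where "Jk k = {j \<in> I. fst (snd j) < k}" for k
  define W where "W k = sn_iter w0 grad hess Z nX nS k" for k
  define Zc where "Zc = (\<lambda>(j::bool \<times> nat \<times> nat) (x::bool \<times> nat \<times> nat \<Rightarrow> 'z). x j)"
  define G where "G k = sn_iter w0 grad hess Zc nX nS k" for k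
  define U where "U k \<omega> = restrict (\<lambda>j. Z j \<omega>) (Jk k)" for k \<omega>
  have JkI: "Jk k \<subseteq> I" for k by (auto simp: Jk_def)
  have nSpos: "0 < nS k" for k
  proof -
    have "nS 0 \<le> nS k" using cond_ii(1) by (simp add: strict_mono_less_eq)
    then show ?thesis using nS0_pos by simp
  qed
  have Zsp: "Z j \<omega> \<in> space P" if "j \<in> I" "\<omega> \<in> space Q" for j \<omega>
    using measurable_space[OF Z_meas[OF that(1)[unfolded I_def]] that(2)] .
  have SHL: "loewner_le (mat \<mu>bar) ((1 / real (nS k)) *\<^sub>R (\<Sum>i<nS k. hess w (zf i)))"
    if zf: "\<And>i. i < nS k \<Longrightarrow> zf i \<in> space P" for k w zf
  proof -
    obtain \<mu>\<beta> L\<beta> where mb: "\<mu>bar \<le> \<mu>\<beta>" and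
      L: "\<forall>w zs. length zs = nS k \<and> set zs \<subseteq> space P \<longrightarrow>
           loewner_le (mat \<mu>\<beta>) ((1 / real (nS k)) *\<^sub>R (\<Sum>z\<leftarrow>zs. hess w z))"
      using A1_sub[OF nSpos[of k]] by blast
    define zs where "zs = map zf [0..<nS k]"
    have "length zs = nS k" "set zs \<subseteq> space P" using zf by (auto simp: zs_def)
    then have l1: "loewner_le (mat \<mu>\<beta>) ((1 / real (nS k)) *\<^sub>R (\<Sum>z\<leftarrow>zs. hess w z))" using L by blast
    have "(\<Sum>z\<leftarrow>zs. hess w z) = (\<Sum>i<nS k. hess w (zf i))"
      by (simp add: zs_def interv_sum_list_conv_sum_set_nat atLeast0LessThan comp_def)
    with l1 have l2: "loewner_le (mat \<mu>\<beta>) ((1 / real (nS k)) *\<^sub>R (\<Sum>i<nS k. hess w (zf i)))" by simp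
    show ?thesis unfolding loewner_le_def
    proof
      fix x :: "real^'n"
      have "x \<bullet> (mat \<mu>bar *v x) = \<mu>bar * (x \<bullet> x)" by (simp add: mat_mv)
      also have "\<dots> \<le> \<mu>\<beta> * (x \<bullet> x)" using mb by (simp add: mult_right_mono)
      also have "\<dots> = x \<bullet> (mat \<mu>\<beta> *v x)" by (simp add: mat_mv)
      also have "\<dots> \<le> x \<bullet> (((1 / real (nS k)) *\<^sub>R (\<Sum>i<nS k. hess w (zf i))) *v x)"
        using l2 unfolding loewner_le_def by blast
      finally show "x \<bullet> (mat \<mu>bar *v x) \<le> x \<bullet> (((1 / real (nS k)) *\<^sub>R (\<Sum>i<nS k. hess w (zf i))) *v x)" .
    qed
  qed
  have Gm: "\<forall>K. Jk k \<subseteq> K \<longrightarrow> G k \<in> borel_measurable (PiM K (\<lambda>_. P))" for k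
  proof (induction k)
    case 0 show ?case by (simp add: G_def)
  next
    case (Suc k)
    show ?case
    proof (intro allI impI)
      fix K assume K: "Jk (Suc k) \<subseteq> K"
      have "Jk k \<subseteq> Jk (Suc k)" by (auto simp: Jk_def)
      then have Gk: "G k \<in> borel_measurable (PiM K (\<lambda>_. P))" using Suc.IH K by blast
      define SH where "SH x = sample_hess hess Zc nS k (G k x) x" for x
      define SG where "SG x = sample_grad grad Zc nX k (G k x) x" for x
      have SHe: "SH x = (1 / real (nS k)) *\<^sub>R (\<Sum>i<nS k. hess (G k x) (x (True, k, i)))" for x
        by (simp add: SH_def sample_hess_def Zc_def)
      have SGe: "SG x = (1 / real (nX k)) *\<^sub>R (\<Sum>i<nX k. grad (G k x) (x (False, k, i)))" for x
        by (simp add: SG_def sample_grad_def Zc_def)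
      have inKS: "(True, k, i) \<in> K" if "i < nS k" for i
        using K that by (auto simp: Jk_def I_def sample_index_def)
      have inKX: "(False, k, i) \<in> K" if "i < nX k" for i
        using K that by (auto simp: Jk_def I_def sample_index_def)
      have hm: "(\<lambda>x. hess (G k x) (x j)) \<in> borel_measurable (PiM K (\<lambda>_. P))" if "j \<in> K" for j
        using measurable_compose[OF measurable_Pair[OF Gk measurable_component_singleton[OF that]] hess_meas]
        by simp
      have gm: "(\<lambda>x. grad (G k x) (x j)) \<in> borel_measurable (PiM K (\<lambda>_. P))" if "j \<in> K" for j
        using measurable_compose[OF measurable_Pair[OF Gk measurable_component_singleton[OF that]] grad_meas]
        by simp
      have SHm: "SH \<in> borel_measurable (PiM K (\<lambda>_. P))"
        unfolding SHe by (intro borel_measurable_scaleR borel_measurable_const borel_measurable_sum hm inKS) auto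
      have SGm: "SG \<in> borel_measurable (PiM K (\<lambda>_. P))"
        unfolding SGe by (intro borel_measurable_scaleR borel_measurable_const borel_measurable_sum gm inKX) auto
      have eq: "G k x - cramer_vec (SH x) (SG x) = G (Suc k) x" if x: "x \<in> space (PiM K (\<lambda>_. P))" for x
      proof -
        have xs: "x (True, k, i) \<in> space P" if "i < nS k" for i
          using x inKS[OF that] by (auto simp: space_PiM)
        have "det (SH x) \<noteq> 0"
          unfolding SHe by (rule loewner_inv(2)[OF SHL A1_bar]) (rule xs)
        then show ?thesis by (simp add: G_def SH_def SG_def matrix_inv_cramer)
      qed
      have "(\<lambda>x. G k x - cramer_vec (SH x) (SG x)) \<in> borel_measurable (PiM K (\<lambda>_. P))"
        by (intro borel_measurable_diff Gk meas_cramer SHm SGm)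
      then show "G (Suc k) \<in> borel_measurable (PiM K (\<lambda>_. P))"
        using measurable_cong[of "PiM K (\<lambda>_. P)" "\<lambda>x. G k x - cramer_vec (SH x) (SG x)" "G (Suc k)"] eq by blast
    qed
  qed
  have GJ: "G k \<in> borel_measurable (PiM (Jk k) (\<lambda>_. P))" for k using Gm by blast
  have WG: "W k \<omega> = G k (U k \<omega>)" for k \<omega>
    unfolding W_def G_def by (rule sn_iter_cong) (auto simp: Zc_def U_def Jk_def I_def)
  have Um: "U k \<in> measurable Q (PiM (Jk k) (\<lambda>_. P))" for k
    unfolding U_def
  proof (rule measurable_restrict)
    fix j assume "j \<in> Jk k"
    then have "j \<in> sample_index nX nS" using JkI[of k] by (auto simp: I_def)
    then show "Z j \<in> measurable Q P" by (rule Z_meas)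
  qed
  have Wm: "W k \<in> borel_measurable Q" for k
  proof -
    have "W k = (\<lambda>\<omega>. G k (U k \<omega>))" using WG by (intro ext) simp
    then show ?thesis using measurable_compose[OF Um GJ] by simp
  qed
  have gF0: "gF wstar = 0" by (rule grad_zero_at_min[OF F_deriv wstar_min])
  have taylor: "norm (HF w *v (w - wstar) - gF w) \<le> M / 2 * (norm (w - wstar))\<^sup>2" for w
    by (rule taylor_bound[OF gF_deriv A3(2) gF0]) (use A3(1) in simp)
  have Hsym: "(hess w z *v a) \<bullet> b = (hess w z *v b) \<bullet> a" if "z \<in> space P" for w z a b
    by (rule schwarz_sym[where f="\<lambda>u. f u z" and g="\<lambda>u. grad u z"]) (use f_deriv grad_deriv that in auto)
  have HFsym: "(HF w *v a) \<bullet> b = (HF w *v b) \<bullet> a" for w a b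
    by (rule schwarz_sym[where f=F and g=gF]) (use F_deriv gF_deriv in auto)
  define e where "e k \<omega> = norm (W k \<omega> - wstar)" for k \<omega>
  define t1 where "t1 k \<omega> = norm ((1 / real (nS k)) *\<^sub>R (\<Sum>i<nS k. (hess (W k \<omega>) (Z (True, k, i) \<omega>) - HF (W k \<omega>)) *v (W k \<omega> - wstar)))" for k \<omega>
  define t3 where "t3 k \<omega> = norm ((1 / real (nX k)) *\<^sub>R (\<Sum>i<nX k. grad (W k \<omega>) (Z (False, k, i) \<omega>) - gF (W k \<omega>)))" for k \<omega>
  have pw: "e (Suc k) \<omega> \<le> (t1 k \<omega> + M / 2 * (e k \<omega>)\<^sup>2 + t3 k \<omega>) / \<mu>bar" if \<omega>: "\<omega> \<in> space Q" for k \<omega>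
  proof -
    define w where "w = W k \<omega>"
    define d where "d = w - wstar"
    define SH where "SH = sample_hess hess Z nS k w \<omega>"
    define SG where "SG = sample_grad grad Z nX k w \<omega>"
    define n where "n = nS k"
    define m where "m = nX k"
    have n0: "real n > 0" using nSpos by (simp add: n_def)
    have m0: "real m > 0" using nX_pos by (simp add: m_def)
    have SHe: "SH = (1 / real n) *\<^sub>R (\<Sum>i<n. hess w (Z (True, k, i) \<omega>))"
      by (simp add: SH_def sample_hess_def n_def)
    have SGe: "SG = (1 / real m) *\<^sub>R (\<Sum>i<m. grad w (Z (False, k, i) \<omega>))"
      by (simp add: SG_def sample_grad_def m_def)
    have L: "loewner_le (mat \<mu>bar) SH"
      unfolding SHe n_def
      by (rule SHL, rule Zsp[OF _ \<omega>]) (simp add: I_def sample_index_def)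
    have Wsuc: "W (Suc k) \<omega> = w - matrix_inv SH *v SG"
      by (simp add: W_def w_def SH_def SG_def)
    have A: "W (Suc k) \<omega> - wstar = matrix_inv SH *v (SH *v d - SG)"
      using loewner_inv(3)[OF L A1_bar, of d]
      by (simp add: Wsuc matrix_vector_mult_diff_distrib d_def algebra_simps)
    have T1: "(SH - HF w) *v d = (1 / real n) *\<^sub>R (\<Sum>i<n. (hess w (Z (True, k, i) \<omega>) - HF w) *v d)"
    proof -
      have "(1 / real n) *\<^sub>R (\<Sum>i<n. (hess w (Z (True, k, i) \<omega>) - HF w) *v d)
          = (1 / real n) *\<^sub>R ((\<Sum>i<n. hess w (Z (True, k, i) \<omega>)) *v d) - (1 / real n) *\<^sub>R (\<Sum>i<n. HF w *v d)"
        by (simp only: matrix_vector_mult_diff_rdistrib sum_subtractf sum_mv scaleR_diff_right)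
      also have "(\<Sum>i<n. HF w *v d) = real n *\<^sub>R (HF w *v d)" by (simp only: sum_constant_scaleR card_lessThan)
      also have "(1 / real n) *\<^sub>R ((\<Sum>i<n. hess w (Z (True, k, i) \<omega>)) *v d) - (1 / real n) *\<^sub>R (real n *\<^sub>R (HF w *v d))
          = SH *v d - HF w *v d" using n0
        by (simp add: SHe scaleR_matrix_vector_assoc)
      finally show ?thesis by (simp add: matrix_vector_mult_diff_rdistrib)
    qed
    have T3: "SG - gF w = (1 / real m) *\<^sub>R (\<Sum>i<m. grad w (Z (False, k, i) \<omega>) - gF w)"
    proof -
      have "(1 / real m) *\<^sub>R (\<Sum>i<m. grad w (Z (False, k, i) \<omega>) - gF w)
          = SG - (1 / real m) *\<^sub>R (\<Sum>i<m. gF w)"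
        by (simp only: SGe sum_subtractf scaleR_diff_right)
      also have "(\<Sum>i<m. gF w) = real m *\<^sub>R gF w" by (simp only: sum_constant_scaleR card_lessThan)
      finally show ?thesis using m0 by simp
    qed
    have split: "SH *v d - SG = (SH - HF w) *v d + (HF w *v d - gF w) - (SG - gF w)"
      by (simp add: matrix_vector_mult_diff_rdistrib)
    have "norm (SH *v d - SG) \<le> norm ((SH - HF w) *v d) + norm (HF w *v d - gF w) + norm (SG - gF w)"
      unfolding split by (rule order_trans[OF norm_triangle_ineq4]) (simp add: norm_triangle_ineq)
    also have "\<dots> \<le> t1 k \<omega> + M / 2 * (e k \<omega>)\<^sup>2 + t3 k \<omega>"
      using taylor[of w] unfolding T1 T3 t1_def t3_def e_def
      by (simp add: w_def d_def n_def m_def)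
    finally have N: "norm (SH *v d - SG) \<le> t1 k \<omega> + M / 2 * (e k \<omega>)\<^sup>2 + t3 k \<omega>" .
    have "e (Suc k) \<omega> \<le> norm (SH *v d - SG) / \<mu>bar"
      unfolding e_def A by (rule loewner_inv(4)[OF L A1_bar])
    also have "\<dots> \<le> (t1 k \<omega> + M / 2 * (e k \<omega>)\<^sup>2 + t3 k \<omega>) / \<mu>bar"
      using N A1_bar by (simp add: divide_right_mono)
    finally show ?thesis .
  qed
  have hessm: "(\<lambda>z. hess w z) \<in> borel_measurable P" for w
    using measurable_compose[OF measurable_Pair[OF measurable_const[of w] measurable_ident_sets[OF refl]] hess_meas]
    by simp
  have gradm: "(\<lambda>z. grad w z) \<in> borel_measurable P" for w
    using measurable_compose[OF measurable_Pair[OF measurable_const[of w] measurable_ident_sets[OF refl]] grad_meas]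
    by simp
  have scale_nn: "(\<integral>\<^sup>+\<omega>. ennreal (g \<omega> / \<mu>bar) \<partial>Q) \<le> ennreal (c / \<mu>bar)"
    if "(\<integral>\<^sup>+\<omega>. ennreal (g \<omega>) \<partial>Q) \<le> ennreal c" "g \<in> borel_measurable Q" "\<And>\<omega>. 0 \<le> g \<omega>" "0 \<le> c" for g c
  proof -
    have "(\<integral>\<^sup>+\<omega>. ennreal (g \<omega> / \<mu>bar) \<partial>Q) = (\<integral>\<^sup>+\<omega>. ennreal (1 / \<mu>bar) * ennreal (g \<omega>) \<partial>Q)"
      using A1_bar that(3) by (intro nn_integral_cong) (simp add: ennreal_mult[symmetric])
    also have "\<dots> = ennreal (1 / \<mu>bar) * (\<integral>\<^sup>+\<omega>. ennreal (g \<omega>) \<partial>Q)"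
      using that(2) by (intro nn_integral_cmult) measurable
    also have "\<dots> \<le> ennreal (1 / \<mu>bar) * ennreal c" using that(1) by (rule mult_left_mono) simp
    also have "\<dots> = ennreal (c / \<mu>bar)" using A1_bar that(4) by (simp add: ennreal_mult[symmetric])
    finally show ?thesis .
  qed
  have bnd1: "(\<integral>\<^sup>+\<omega>. ennreal (norm ((1 / real (nS k)) *\<^sub>R (\<Sum>i<nS k. (hess w (Z (True, k, i) \<omega>) - HF w) *v (w - wstar))) / \<mu>bar) \<partial>Q)
      \<le> ennreal (\<sigma> / (\<mu>bar * sqrt (real (nS k))) * norm (w - wstar))" for k w
  proof -
    define d where "d = w - wstar"
    define \<phi> where "\<phi> z = (hess w z - HF w) *v d" for z
    define B where "B z = hess w z - HF w" for z
    have Bsym: "(B z *v a) \<bullet> b = (B z *v b) \<bullet> a" if "z \<in> space P" for z a b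
      using Hsym[OF that, of w a b] HFsym[of w a b]
      by (simp add: B_def matrix_vector_mult_diff_rdistrib inner_diff_left)
    have \<phi>m: "\<phi> \<in> borel_measurable P"
      unfolding \<phi>_def by (intro meas_mv borel_measurable_diff hessm measurable_const) auto
    have i1: "integrable P (\<lambda>z. hess w z *v d)"
      using integrable_bounded_linear[OF bl_mv_left hess_int[of w]] .
    have \<phi>i: "integrable P \<phi>" unfolding \<phi>_def matrix_vector_mult_diff_rdistrib
      by (rule Bochner_Integration.integrable_diff[OF i1 finite_measure.integrable_const[OF P.finite_measure_axioms]])
    have \<phi>0: "(\<integral>z. \<phi> z \<partial>P) = 0"
    proof -
      have "(\<integral>z. \<phi> z \<partial>P) = (\<integral>z. hess w z *v d \<partial>P) - HF w *v d"
        unfolding \<phi>_def matrix_vector_mult_diff_rdistrib using i1 by (simp add: P.prob_space)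
      also have "(\<integral>z. hess w z *v d \<partial>P) = (\<integral>z. hess w z \<partial>P) *v d"
        using integral_bounded_linear[OF bl_mv_left hess_int[of w]] .
      finally show ?thesis by (simp add: HF_unbiased)
    qed
    have nq: "(norm (\<phi> z))\<^sup>2 = ((B z ** B z) *v d) \<bullet> d" if "z \<in> space P" for z
    proof -
      have "(norm (\<phi> z))\<^sup>2 = (B z *v d) \<bullet> (B z *v d)" by (simp add: \<phi>_def B_def power2_norm_eq_inner)
      also have "\<dots> = (B z *v (B z *v d)) \<bullet> d" by (rule Bsym[OF that])
      finally show ?thesis by (simp add: matrix_vector_mul_assoc)
    qed
    have i2: "integrable P (\<lambda>z. ((B z ** B z) *v d) \<bullet> d)"
      using integrable_bounded_linear[OF bl_quad A4(2)[of w]] by (simp add: B_def)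
    have \<phi>i2: "integrable P (\<lambda>z. (norm (\<phi> z))\<^sup>2)"
      using i2 by (subst Bochner_Integration.integrable_cong[OF refl nq]) auto
    have "(\<integral>z. (norm (\<phi> z))\<^sup>2 \<partial>P) = (\<integral>z. ((B z ** B z) *v d) \<bullet> d \<partial>P)"
      by (rule Bochner_Integration.integral_cong[OF refl nq])
    also have "\<dots> = ((\<integral>z. B z ** B z \<partial>P) *v d) \<bullet> d"
      using integral_bounded_linear[OF bl_quad A4(2)[of w]] by (simp add: B_def)
    also have "\<dots> \<le> norm ((\<integral>z. B z ** B z \<partial>P) *v d) * norm d" by (rule norm_cauchy_schwarz)
    also have "\<dots> \<le> onorm (\<lambda>x. (\<integral>z. B z ** B z \<partial>P) *v x) * norm d * norm d"
      by (intro mult_right_mono mat_onorm_bound) simp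
    also have "\<dots> \<le> \<sigma>\<^sup>2 * norm d * norm d"
      using A4(3)[of w] by (intro mult_right_mono) (simp_all add: B_def)
    finally have \<phi>V: "(\<integral>z. (norm (\<phi> z))\<^sup>2 \<partial>P) \<le> \<sigma>\<^sup>2 * (norm d)\<^sup>2" by (simp add: power2_eq_square)
    have bv: "(\<integral>\<^sup>+\<omega>. ennreal (norm ((1 / real (nS k)) *\<^sub>R (\<Sum>i<nS k. \<phi> (Z (True, k, i) \<omega>)))) \<partial>Q)
        \<le> ennreal (sqrt (\<sigma>\<^sup>2 * (norm d)\<^sup>2 / real (nS k)))"
      by (rule block_var[OF probQ Z_indep Z_meas Z_distr _ _ nSpos \<phi>m \<phi>i \<phi>i2 \<phi>0 \<phi>V])
         (auto simp: inj_on_def sample_index_def)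
    have sq: "sqrt (\<sigma>\<^sup>2 * (norm d)\<^sup>2 / real (nS k)) / \<mu>bar = \<sigma> / (\<mu>bar * sqrt (real (nS k))) * norm (w - wstar)"
      using A4(1) by (simp add: real_sqrt_mult real_sqrt_divide d_def)
    have gm: "(\<lambda>\<omega>. norm ((1 / real (nS k)) *\<^sub>R (\<Sum>i<nS k. \<phi> (Z (True, k, i) \<omega>)))) \<in> borel_measurable Q"
    proof -
      have "(\<lambda>\<omega>. \<phi> (Z (True, k, i) \<omega>)) \<in> borel_measurable Q" if "i < nS k" for i
        using measurable_compose[OF Z_meas \<phi>m, of "(True, k, i)"] that by (simp add: sample_index_def comp_def)
      then have sm: "(\<lambda>\<omega>. \<Sum>i<nS k. \<phi> (Z (True, k, i) \<omega>)) \<in> borel_measurable Q"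
        by (rule borel_measurable_sum) simp
      show ?thesis
        using measurable_compose[OF borel_measurable_scaleR[OF borel_measurable_const sm] borel_measurable_norm] .

    qed
    show ?thesis using scale_nn[OF bv gm] sq by (simp add: \<phi>_def d_def)
  qed
  have bnd3: "(\<integral>\<^sup>+\<omega>. ennreal (norm ((1 / real (nX k)) *\<^sub>R (\<Sum>i<nX k. grad w (Z (False, k, i) \<omega>) - gF w)) / \<mu>bar) \<partial>Q)
      \<le> ennreal (v / (\<mu>bar * sqrt (real (nX k))))" for k w
  proof -
    define \<phi> where "\<phi> z = grad w z - gF w" for z
    have \<phi>m: "\<phi> \<in> borel_measurable P"
      unfolding \<phi>_def by (intro borel_measurable_diff gradm measurable_const) auto
    have \<phi>i: "integrable P \<phi>" unfolding \<phi>_def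
      by (rule Bochner_Integration.integrable_diff[OF grad_int finite_measure.integrable_const[OF P.finite_measure_axioms]])
    have \<phi>0: "(\<integral>z. \<phi> z \<partial>P) = 0"
      unfolding \<phi>_def using grad_int[of w] by (simp add: P.prob_space gF_unbiased)
    have \<phi>i2: "integrable P (\<lambda>z. (norm (\<phi> z))\<^sup>2)" unfolding \<phi>_def by (rule A2(2))
    have \<phi>V: "(\<integral>z. (norm (\<phi> z))\<^sup>2 \<partial>P) \<le> v\<^sup>2" unfolding \<phi>_def by (rule A2(3))
    have bv: "(\<integral>\<^sup>+\<omega>. ennreal (norm ((1 / real (nX k)) *\<^sub>R (\<Sum>i<nX k. \<phi> (Z (False, k, i) \<omega>)))) \<partial>Q)
        \<le> ennreal (sqrt (v\<^sup>2 / real (nX k)))"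
      by (rule block_var[OF probQ Z_indep Z_meas Z_distr _ _ nX_pos \<phi>m \<phi>i \<phi>i2 \<phi>0 \<phi>V])
         (auto simp: inj_on_def sample_index_def)
    have sq: "sqrt (v\<^sup>2 / real (nX k)) / \<mu>bar = v / (\<mu>bar * sqrt (real (nX k)))"
      using A2(1) by (simp add: real_sqrt_divide)
    have gm: "(\<lambda>\<omega>. norm ((1 / real (nX k)) *\<^sub>R (\<Sum>i<nX k. \<phi> (Z (False, k, i) \<omega>)))) \<in> borel_measurable Q"
    proof -
      have "(\<lambda>\<omega>. \<phi> (Z (False, k, i) \<omega>)) \<in> borel_measurable Q" if "i < nX k" for i
        using measurable_compose[OF Z_meas \<phi>m, of "(False, k, i)"] that by (simp add: sample_index_def comp_def)
      then have sm: "(\<lambda>\<omega>. \<Sum>i<nX k. \<phi> (Z (False, k, i) \<omega>)) \<in> borel_measurable Q"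
        by (rule borel_measurable_sum) simp
      show ?thesis
        using measurable_compose[OF borel_measurable_scaleR[OF borel_measurable_const sm] borel_measurable_norm] .
    qed
    have "(\<integral>\<^sup>+\<omega>. ennreal (norm ((1 / real (nX k)) *\<^sub>R (\<Sum>i<nX k. \<phi> (Z (False, k, i) \<omega>))) / \<mu>bar) \<partial>Q)
       \<le> ennreal (sqrt (v\<^sup>2 / real (nX k)) / \<mu>bar)"
      by (rule scale_nn[OF bv gm]) simp_all
    then show ?thesis using sq by (simp add: \<phi>_def)
  qed
  \<comment> \<open>decoupling the iterate from the fresh samples\<close>
  have HFm: "HF \<in> borel_measurable borel" by (rule borel_measurable_continuous_onI[OF HF_cont])
  have gFm: "gF \<in> borel_measurable borel"
    by (rule borel_measurable_continuous_onI)
       (use gF_deriv in \<open>auto intro: has_derivative_continuous continuous_at_imp_continuous_on\<close>)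
  have compP: "(\<lambda>p. fn (fst p) (snd p j)) \<in> borel_measurable (borel \<Otimes>\<^sub>M PiM B (\<lambda>_. P))"
    if "j \<in> B" "(\<lambda>(w, z). fn w z) \<in> borel_measurable (borel \<Otimes>\<^sub>M P)"
    for j B and fn :: "real^'n \<Rightarrow> 'z \<Rightarrow> 'c::{second_countable_topology, banach}"
    using measurable_compose[OF measurable_Pair[OF measurable_fst measurable_compose[OF measurable_snd measurable_component_singleton[OF that(1)]]] that(2)]
    by simp
  have pairm: "(\<lambda>\<omega>. (G k (U k \<omega>), restrict (\<lambda>j. Z j \<omega>) B)) \<in> measurable Q (borel \<Otimes>\<^sub>M PiM B (\<lambda>_. P))"
    if "B \<subseteq> I" for k B
  proof (rule measurable_Pair)
    show "(\<lambda>\<omega>. G k (U k \<omega>)) \<in> borel_measurable Q" using measurable_compose[OF Um GJ] .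
    show "(\<lambda>\<omega>. restrict (\<lambda>j. Z j \<omega>) B) \<in> measurable Q (PiM B (\<lambda>_. P))"
    proof (rule measurable_restrict)
      fix j assume "j \<in> B"
      then have "j \<in> sample_index nX nS" using that by (auto simp: I_def)
      then show "Z j \<in> measurable Q P" by (rule Z_meas)
    qed
  qed
  have e_meas: "(\<lambda>\<omega>. e k \<omega>) \<in> borel_measurable Q" for k
    unfolding e_def by (intro borel_measurable_norm[THEN measurable_compose[rotated]] borel_measurable_diff Wm measurable_const) auto
  have I1: "(\<integral>\<^sup>+\<omega>. ennreal (t1 k \<omega> / \<mu>bar) \<partial>Q) \<le> (\<integral>\<^sup>+\<omega>. ennreal (\<sigma> / (\<mu>bar * sqrt (real (nS k))) * e k \<omega>) \<partial>Q)
    \<and> (\<lambda>\<omega>. ennreal (t1 k \<omega> / \<mu>bar)) \<in> borel_measurable Q" for k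
  proof -
    define B where "B = (\<lambda>i. (True, k, i)) ` {..<nS k}"
    define h where "h w x = ennreal (norm ((1 / real (nS k)) *\<^sub>R (\<Sum>i<nS k. (hess w (x (True, k, i)) - HF w) *v (w - wstar))) / \<mu>bar)"
      for w and x :: "bool \<times> nat \<times> nat \<Rightarrow> 'z"
    define \<beta> where "\<beta> w = ennreal (\<sigma> / (\<mu>bar * sqrt (real (nS k))) * norm (w - wstar))" for w :: "real^'n"
    have BI: "B \<subseteq> I" by (auto simp: B_def I_def sample_index_def)
    have JB: "Jk k \<inter> B = {}" by (auto simp: B_def Jk_def)
    have hm: "(\<lambda>p. h (fst p) (snd p)) \<in> borel_measurable (borel \<Otimes>\<^sub>M PiM B (\<lambda>_. P))"
    proof -
      have hi: "(\<lambda>p. (hess (fst p) (snd p (True, k, i)) - HF (fst p)) *v (fst p - wstar)) \<in> borel_measurable (borel \<Otimes>\<^sub>M PiM B (\<lambda>_. P))"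
        if "i < nS k" for i
      proof (intro meas_mv borel_measurable_diff)
        show "(\<lambda>p. hess (fst p) (snd p (True, k, i))) \<in> borel_measurable (borel \<Otimes>\<^sub>M PiM B (\<lambda>_. P))"
          by (rule compP[OF _ hess_meas]) (use that in \<open>simp add: B_def\<close>)
        show "(\<lambda>p. HF (fst p)) \<in> borel_measurable (borel \<Otimes>\<^sub>M PiM B (\<lambda>_. P))"
          using measurable_compose[OF measurable_fst HFm] .
      qed auto
      then have "(\<lambda>p. \<Sum>i<nS k. (hess (fst p) (snd p (True, k, i)) - HF (fst p)) *v (fst p - wstar)) \<in> borel_measurable (borel \<Otimes>\<^sub>M PiM B (\<lambda>_. P))"
        by (rule borel_measurable_sum) simp
      from measurable_compose[OF borel_measurable_scaleR[OF borel_measurable_const[of "1 / real (nS k)"] this] borel_measurable_norm]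
      have "(\<lambda>p. norm ((1 / real (nS k)) *\<^sub>R (\<Sum>i<nS k. (hess (fst p) (snd p (True, k, i)) - HF (fst p)) *v (fst p - wstar))) / \<mu>bar) \<in> borel_measurable (borel \<Otimes>\<^sub>M PiM B (\<lambda>_. P))"
        by (rule borel_measurable_divide[OF _ borel_measurable_const])
      from measurable_compose[OF this measurable_ennreal] show ?thesis by (simp add: h_def)
    qed
    have \<beta>m: "\<beta> \<in> borel_measurable borel" unfolding \<beta>_def by measurable
    have bnd: "(\<integral>\<^sup>+\<omega>. h w (restrict (\<lambda>j. Z j \<omega>) B) \<partial>Q) \<le> \<beta> w" for w
      using bnd1[of k w] by (simp add: h_def \<beta>_def B_def)
    have dec: "(\<integral>\<^sup>+\<omega>. h (G k (restrict (\<lambda>j. Z j \<omega>) (Jk k))) (restrict (\<lambda>j. Z j \<omega>) B) \<partial>Q)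
         \<le> (\<integral>\<^sup>+\<omega>. \<beta> (G k (restrict (\<lambda>j. Z j \<omega>) (Jk k))) \<partial>Q)"
      by (rule decouple[OF probQ Z_indep[folded I_def] JkI BI JB GJ hm bnd \<beta>m])
    have eqh: "h (G k (restrict (\<lambda>j. Z j \<omega>) (Jk k))) (restrict (\<lambda>j. Z j \<omega>) B) = ennreal (t1 k \<omega> / \<mu>bar)" for \<omega>
      using WG[of k \<omega>] by (simp add: h_def t1_def U_def B_def)
    have eqb: "\<beta> (G k (restrict (\<lambda>j. Z j \<omega>) (Jk k))) = ennreal (\<sigma> / (\<mu>bar * sqrt (real (nS k))) * e k \<omega>)" for \<omega>
      using WG[of k \<omega>] by (simp add: \<beta>_def e_def U_def)
    have m: "(\<lambda>\<omega>. h (G k (U k \<omega>)) (restrict (\<lambda>j. Z j \<omega>) B)) \<in> borel_measurable Q"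
      using measurable_compose[OF pairm[OF BI] hm] by simp
    show ?thesis using dec m unfolding eqh eqb U_def by simp
  qed
  have I3: "(\<integral>\<^sup>+\<omega>. ennreal (t3 k \<omega> / \<mu>bar) \<partial>Q) \<le> ennreal (v / (\<mu>bar * sqrt (real (nX k))))
    \<and> (\<lambda>\<omega>. ennreal (t3 k \<omega> / \<mu>bar)) \<in> borel_measurable Q" for k
  proof -
    define B where "B = (\<lambda>i. (False, k, i)) ` {..<nX k}"
    define h where "h w x = ennreal (norm ((1 / real (nX k)) *\<^sub>R (\<Sum>i<nX k. grad w (x (False, k, i)) - gF w)) / \<mu>bar)"
      for w and x :: "bool \<times> nat \<times> nat \<Rightarrow> 'z"
    define \<beta> where "\<beta> (w :: real^'n) = ennreal (v / (\<mu>bar * sqrt (real (nX k))))" for w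
    have BI: "B \<subseteq> I" by (auto simp: B_def I_def sample_index_def)
    have JB: "Jk k \<inter> B = {}" by (auto simp: B_def Jk_def)
    have hm: "(\<lambda>p. h (fst p) (snd p)) \<in> borel_measurable (borel \<Otimes>\<^sub>M PiM B (\<lambda>_. P))"
    proof -
      have hi: "(\<lambda>p. grad (fst p) (snd p (False, k, i)) - gF (fst p)) \<in> borel_measurable (borel \<Otimes>\<^sub>M PiM B (\<lambda>_. P))"
        if "i < nX k" for i
      proof (intro borel_measurable_diff)
        show "(\<lambda>p. grad (fst p) (snd p (False, k, i))) \<in> borel_measurable (borel \<Otimes>\<^sub>M PiM B (\<lambda>_. P))"
          by (rule compP[OF _ grad_meas]) (use that in \<open>simp add: B_def\<close>)
        show "(\<lambda>p. gF (fst p)) \<in> borel_measurable (borel \<Otimes>\<^sub>M PiM B (\<lambda>_. P))"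
          using measurable_compose[OF measurable_fst gFm] .
      qed
      then have "(\<lambda>p. \<Sum>i<nX k. grad (fst p) (snd p (False, k, i)) - gF (fst p)) \<in> borel_measurable (borel \<Otimes>\<^sub>M PiM B (\<lambda>_. P))"
        by (rule borel_measurable_sum) simp
      from measurable_compose[OF borel_measurable_scaleR[OF borel_measurable_const[of "1 / real (nX k)"] this] borel_measurable_norm]
      have "(\<lambda>p. norm ((1 / real (nX k)) *\<^sub>R (\<Sum>i<nX k. grad (fst p) (snd p (False, k, i)) - gF (fst p))) / \<mu>bar) \<in> borel_measurable (borel \<Otimes>\<^sub>M PiM B (\<lambda>_. P))"
        by (rule borel_measurable_divide[OF _ borel_measurable_const])
      from measurable_compose[OF this measurable_ennreal] show ?thesis by (simp add: h_def)
    qed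
    have \<beta>m: "\<beta> \<in> borel_measurable borel" unfolding \<beta>_def by measurable
    have bnd: "(\<integral>\<^sup>+\<omega>. h w (restrict (\<lambda>j. Z j \<omega>) B) \<partial>Q) \<le> \<beta> w" for w
      using bnd3[of k w] by (simp add: h_def \<beta>_def B_def)
    have dec: "(\<integral>\<^sup>+\<omega>. h (G k (restrict (\<lambda>j. Z j \<omega>) (Jk k))) (restrict (\<lambda>j. Z j \<omega>) B) \<partial>Q)
         \<le> (\<integral>\<^sup>+\<omega>. \<beta> (G k (restrict (\<lambda>j. Z j \<omega>) (Jk k))) \<partial>Q)"
      by (rule decouple[OF probQ Z_indep[folded I_def] JkI BI JB GJ hm bnd \<beta>m])
    have eqh: "h (G k (restrict (\<lambda>j. Z j \<omega>) (Jk k))) (restrict (\<lambda>j. Z j \<omega>) B) = ennreal (t3 k \<omega> / \<mu>bar)" for \<omega>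
      using WG[of k \<omega>] by (simp add: h_def t3_def U_def B_def)
    have m: "(\<lambda>\<omega>. h (G k (U k \<omega>)) (restrict (\<lambda>j. Z j \<omega>) B)) \<in> borel_measurable Q"
      using measurable_compose[OF pairm[OF BI] hm] by simp
    have c: "(\<integral>\<^sup>+\<omega>. \<beta> (G k (restrict (\<lambda>j. Z j \<omega>) (Jk k))) \<partial>Q) = ennreal (v / (\<mu>bar * sqrt (real (nX k))))"
      by (simp add: \<beta>_def Q.emeasure_space_1)
    show ?thesis using dec m c unfolding eqh U_def by simp
  qed
  define E where "E k = (\<integral>\<omega>. e k \<omega> \<partial>Q)" for k
  have e0: "0 \<le> e k \<omega>" for k \<omega> by (simp add: e_def)
  have e2i: "integrable Q (\<lambda>\<omega>. (e k \<omega>)\<^sup>2)" for k using B1(2)[of k] by (simp add: e_def W_def)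
  have ei: "integrable Q (e k)" for k
    by (rule finite_measure.square_integrable_imp_integrable[OF Q.finite_measure_axioms e_meas e2i])
  have E0: "0 \<le> E k" for k by (simp add: E_def e0)
  have step: "E (Suc k) \<le> M / (2 * \<mu>bar) * (\<integral>\<omega>. (e k \<omega>)\<^sup>2 \<partial>Q)
      + \<sigma> / (\<mu>bar * sqrt (real (nS k))) * E k + v / (\<mu>bar * sqrt (real (nX k)))" for k
  proof -
    define c1 where "c1 = \<sigma> / (\<mu>bar * sqrt (real (nS k)))"
    define c2 where "c2 = M / (2 * \<mu>bar)"
    define c3 where "c3 = v / (\<mu>bar * sqrt (real (nX k)))"
    have c1p: "0 \<le> c1" using A4(1) A1_bar by (simp add: c1_def)
    have c2p: "0 \<le> c2" using A3(1) A1_bar by (simp add: c2_def)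
    have c3p: "0 \<le> c3" using A2(1) A1_bar by (simp add: c3_def)
    have t1p: "0 \<le> t1 k \<omega> / \<mu>bar" for \<omega> using A1_bar by (simp add: t1_def)
    have t3p: "0 \<le> t3 k \<omega> / \<mu>bar" for \<omega> using A1_bar by (simp add: t3_def)
    have e2m: "(\<lambda>\<omega>. ennreal (c2 * (e k \<omega>)\<^sup>2)) \<in> borel_measurable Q"
      using e_meas[of k] by measurable
    have "ennreal (E (Suc k)) = (\<integral>\<^sup>+\<omega>. ennreal (e (Suc k) \<omega>) \<partial>Q)"
      unfolding E_def by (rule nn_integral_eq_integral[symmetric]) (simp_all add: ei e0)
    also have "\<dots> \<le> (\<integral>\<^sup>+\<omega>. ennreal (t1 k \<omega> / \<mu>bar) + ennreal (c2 * (e k \<omega>)\<^sup>2) + ennreal (t3 k \<omega> / \<mu>bar) \<partial>Q)"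
    proof (rule nn_integral_mono)
      fix \<omega> assume \<omega>: "\<omega> \<in> space Q"
      have "e (Suc k) \<omega> \<le> t1 k \<omega> / \<mu>bar + c2 * (e k \<omega>)\<^sup>2 + t3 k \<omega> / \<mu>bar"
        using pw[OF \<omega>, of k] by (simp add: c2_def add_divide_distrib)
      then have "ennreal (e (Suc k) \<omega>) \<le> ennreal (t1 k \<omega> / \<mu>bar + c2 * (e k \<omega>)\<^sup>2 + t3 k \<omega> / \<mu>bar)"
        by (rule ennreal_leI)
      also have "\<dots> = ennreal (t1 k \<omega> / \<mu>bar) + ennreal (c2 * (e k \<omega>)\<^sup>2) + ennreal (t3 k \<omega> / \<mu>bar)"
        using t1p[of \<omega>] t3p[of \<omega>] c2p by (simp add: ennreal_plus)
      finally show "ennreal (e (Suc k) \<omega>) \<le> ennreal (t1 k \<omega> / \<mu>bar) + ennreal (c2 * (e k \<omega>)\<^sup>2) + ennreal (t3 k \<omega> / \<mu>bar)" .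
    qed
    also have "\<dots> = (\<integral>\<^sup>+\<omega>. ennreal (t1 k \<omega> / \<mu>bar) \<partial>Q) + (\<integral>\<^sup>+\<omega>. ennreal (c2 * (e k \<omega>)\<^sup>2) \<partial>Q) + (\<integral>\<^sup>+\<omega>. ennreal (t3 k \<omega> / \<mu>bar) \<partial>Q)"
    proof -
      have m1: "(\<lambda>\<omega>. ennreal (t1 k \<omega> / \<mu>bar)) \<in> borel_measurable Q" using I1[of k] by blast
      have m3: "(\<lambda>\<omega>. ennreal (t3 k \<omega> / \<mu>bar)) \<in> borel_measurable Q" using I3[of k] by blast
      have m12: "(\<lambda>\<omega>. ennreal (t1 k \<omega> / \<mu>bar) + ennreal (c2 * (e k \<omega>)\<^sup>2)) \<in> borel_measurable Q"
        using m1 e2m by (rule borel_measurable_add)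
      show ?thesis
        by (simp only: nn_integral_add[OF m12 m3] nn_integral_add[OF m1 e2m])
    qed
    also have "\<dots> \<le> (\<integral>\<^sup>+\<omega>. ennreal (c1 * e k \<omega>) \<partial>Q) + (\<integral>\<^sup>+\<omega>. ennreal (c2 * (e k \<omega>)\<^sup>2) \<partial>Q) + ennreal c3"
      using I1[of k] I3[of k] unfolding c1_def c3_def by (intro add_mono) auto
    also have "(\<integral>\<^sup>+\<omega>. ennreal (c1 * e k \<omega>) \<partial>Q) = ennreal (c1 * E k)"
      unfolding E_def using ei[of k] c1p e0
      by (subst nn_integral_eq_integral) (auto intro: integrable_mult_right)
    also have "(\<integral>\<^sup>+\<omega>. ennreal (c2 * (e k \<omega>)\<^sup>2) \<partial>Q) = ennreal (c2 * (\<integral>\<omega>. (e k \<omega>)\<^sup>2 \<partial>Q))"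
      using e2i[of k] c2p by (subst nn_integral_eq_integral) (auto intro: integrable_mult_right)
    also have "ennreal (c1 * E k) + ennreal (c2 * (\<integral>\<omega>. (e k \<omega>)\<^sup>2 \<partial>Q)) + ennreal c3
        = ennreal (c1 * E k + c2 * (\<integral>\<omega>. (e k \<omega>)\<^sup>2 \<partial>Q) + c3)"
      using c1p c2p c3p E0[of k] by (simp add: ennreal_plus)
    finally have "E (Suc k) \<le> c1 * E k + c2 * (\<integral>\<omega>. (e k \<omega>)\<^sup>2 \<partial>Q) + c3"
      using c1p c2p c3p E0[of k] by (subst (asm) ennreal_le_iff) auto
    then show ?thesis by (simp add: c1_def c2_def c3_def)
  qed
  define A where "A = M * \<gamma> / (2 * \<mu>bar)"
  define \<tau>0 where "\<tau>0 = \<mu>bar / (3 * \<gamma> * M)"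
  define b where "b k = \<sigma> / (\<mu>bar * sqrt (real (nS k)))" for k
  define K where "K = v / (\<mu>bar * sqrt (real (nX 0)))"
  have Apos: "0 < A" using A3(1) B1(1) A1_bar by (simp add: A_def)
  have \<tau>0pos: "0 < \<tau>0" using A3(1) B1(1) A1_bar by (simp add: \<tau>0_def)
  have A\<tau>0: "A * \<tau>0 \<le> 1/6" using A3(1) B1(1) A1_bar by (simp add: A_def \<tau>0_def field_simps)
  have nXp: "0 < real (nX k)" for k using nX_pos[of k] by simp
  have etak: "\<eta> k ^ k \<ge> 1" for k
  proof (cases "k = 0")
    case False
    then have "\<eta> 1 \<le> \<eta> k" using cond_i(3) by (simp add: strict_mono_less_eq)
    then show ?thesis using cond_i(5) by (simp add: one_le_power)
  qed simp
  have b0: "0 \<le> b k" for k using A4(1) A1_bar by (simp add: b_def)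
  have b14: "b k \<le> 1/4" for k
  proof (cases "\<sigma> = 0")
    case True then show ?thesis by (simp add: b_def)
  next
    case False
    then have sp: "0 < \<sigma>" using A4(1) by simp
    have "4 * \<sigma> / \<mu>bar \<le> sqrt (real (nS 0))"
      using real_sqrt_le_mono[OF cond_ii(3)] sp A1_bar by simp
    also have "\<dots> \<le> sqrt (real (nS k))" using cond_ii(1) by (simp add: strict_mono_less_eq)
    finally have "4 * \<sigma> \<le> \<mu>bar * sqrt (real (nS k))" using A1_bar by (simp add: field_simps)
    then show ?thesis using sp A1_bar nSpos[of k] by (simp add: b_def field_simps)
  qed
  have btend: "b \<longlonglongrightarrow> 0"
  proof -
    have r: "filterlim (\<lambda>k. real (nS k)) at_top sequentially"
      using filterlim_compose[OF filterlim_real_sequentially cond_ii(2)] by (simp add: o_def)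
    have "filterlim (\<lambda>k. sqrt (real (nS k))) at_top sequentially"
      using filterlim_compose[OF sqrt_at_top r] by (simp add: o_def)
    then have q: "filterlim (\<lambda>k. sqrt (real (nS k))) at_top sequentially" .
    from tendsto_divide_0[OF tendsto_const filterlim_at_top_imp_at_infinity[OF this], of 1]
    have "(\<lambda>k. 1 / sqrt (real (nS k))) \<longlonglongrightarrow> 0" by simp
    then have "(\<lambda>k. (\<sigma> / \<mu>bar) * (1 / sqrt (real (nS k)))) \<longlonglongrightarrow> (\<sigma> / \<mu>bar) * 0"
      by (intro tendsto_mult tendsto_const)
    moreover have "b = (\<lambda>k. (\<sigma> / \<mu>bar) * (1 / sqrt (real (nS k))))" by (simp add: b_def fun_eq_iff)
    ultimately show ?thesis by simp
  qed
  have K0: "0 \<le> K" using A2(1) A1_bar by (simp add: K_def)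
  have K\<tau>: "K \<le> \<tau>0 / 2"
  proof -
    have c0: "0 \<le> 6 * v * \<gamma> * M / \<mu>bar\<^sup>2" using A2(1) B1(1) A3(1) by simp
    have "6 * v * \<gamma> * M / \<mu>bar\<^sup>2 \<le> sqrt (real (nX 0))"
    proof -
      have "sqrt ((6 * v * \<gamma> * M / \<mu>bar\<^sup>2)\<^sup>2) \<le> sqrt (real (nX 0))"
        using real_sqrt_le_mono[OF cond_i(2)] .
      then show ?thesis using c0 by (simp only: real_sqrt_abs abs_of_nonneg)
    qed
    then have "6 * v * \<gamma> * M \<le> \<mu>bar\<^sup>2 * sqrt (real (nX 0))" using A1_bar by (simp add: field_simps)
    then show ?thesis using A1_bar B1(1) A3(1) nXp[of 0]
      by (simp add: K_def \<tau>0_def field_simps power2_eq_square)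
  qed
  have cX: "v / (\<mu>bar * sqrt (real (nX k))) \<le> K / sqrt (\<eta> k ^ k)" for k
  proof -
    have "real (nX 0) * \<eta> k ^ k \<le> real (nX k)" by (rule cond_i(1))
    then have "sqrt (real (nX 0)) * sqrt (\<eta> k ^ k) \<le> sqrt (real (nX k))"
      by (simp add: real_sqrt_mult[symmetric])
    moreover have "0 < sqrt (real (nX 0)) * sqrt (\<eta> k ^ k)" using nXp[of 0] etak[of k] by simp
    ultimately have "v / (\<mu>bar * sqrt (real (nX k))) \<le> v / (\<mu>bar * (sqrt (real (nX 0)) * sqrt (\<eta> k ^ k)))"
      using A2(1) A1_bar nX_pos[of k] nX_pos[of 0] etak[of k] by (intro divide_left_mono mult_left_mono mult_pos_pos) auto
    then show ?thesis by (simp add: K_def)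
  qed
  have Estep: "E (Suc k) \<le> A * (E k)\<^sup>2 + b k * E k + K / sqrt (\<eta> k ^ k)" for k
  proof -
    have "M / (2 * \<mu>bar) * (\<integral>\<omega>. (e k \<omega>)\<^sup>2 \<partial>Q) \<le> M / (2 * \<mu>bar) * (\<gamma> * (E k)\<^sup>2)"
      using B1(3)[of k] A3(1) A1_bar by (intro mult_left_mono) (simp_all add: E_def e_def W_def)
    then show ?thesis using step[of k] cX[of k] by (simp add: A_def b_def mult.assoc)
  qed
  have Einit: "E 0 \<le> \<tau>0"
    using init by (simp add: E_def e_def W_def Q.prob_space \<tau>0_def mult.assoc)
  obtain \<tau> :: "nat \<Rightarrow> real" where \<tau>: "\<forall>k. 0 < \<tau> k" "\<forall>k. E k \<le> \<tau> k" "(\<lambda>k. \<tau> (Suc k) / \<tau> k) \<longlonglongrightarrow> 0"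
    using superlinear_recursion[OF Apos \<tau>0pos A\<tau>0 b0 b14 btend K0 K\<tau> cond_i(3,4,5) E0 Einit Estep] by blast
  show ?thesis
    using \<tau> by (intro exI[of _ \<tau>]) (simp add: E_def e_def W_def)
qed

end
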